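(* Let $\rho$ be an $N\times N$ density matrix with eigenvalue vector $\lambda$ (nonnegative entries summing to one). Let $\{|i\rangle\}_{i=1}^N$ and $\{|a_i\rangle\}_{i=1}^N$ be orthonormal bases of $\mathbb{C}^N$, and let $p_i=\langle i|\rho|i\rangle$, $q_i=\langle a_i|\rho|a_i\rangle$. Let $1\le m,n\le N$ and let $A$ be the $n\times m$ matrix with entries $A_{ij}=\langle a_i|j\rangle$ ($1\le i\le n$, $1\le j\le m$). Define $\mu\in\mathbb{R}^{m+n}$ by $\mu=(1,1,\dots,1)+\big(\sigma(A)\oplus(-\sigma(A))\big)$, where $\sigma(A)$ is the vector of singular values of $A$, $\oplus$ denotes concatenation, and $\sigma(A)\oplus(-\sigma(A))$ is extended by zeros to length $m+n$. Then $$p_1+\dots+p_m+q_1+\dots+q_n\le\lambda^{\downarrow}\cdot\mu^{\downarrow},$$ where $x^\downarrow$ denotes the nonincreasing rearrangement of $x$, $\cdot$ is the standard scalar product, and the shorter of the two vectors is padded with zeros. *)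

theory Defs
  imports "Jordan_Normal_Form.Jordan_Normal_Form"
begin

definition braket :: "complex vec \<Rightarrow> complex vec \<Rightarrow> complex" where
  "braket a b = (\<Sum>k<dim_vec a. cnj (a $ k) * b $ k)"

definition ctrans :: "complex mat \<Rightarrow> complex mat" where
  "ctrans A = mat (dim_col A) (dim_row A) (\<lambda>(i,j). cnj (A $$ (j,i)))"

definition density_mat :: "nat \<Rightarrow> complex mat \<Rightarrow> bool" where
  "density_mat N \<rho> \<longleftrightarrow> \<rho> \<in> carrier_mat N N
     \<and> (\<forall>i<N. \<forall>j<N. \<rho> $$ (i,j) = cnj (\<rho> $$ (j,i)))
     \<and> (\<forall>v \<in> carrier_vec N. Im (braket v (\<rho> *\<^sub>v v)) = 0 \<and> Re (braket v (\<rho> *\<^sub>v v)) \<ge> 0)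
     \<and> (\<Sum>i<N. \<rho> $$ (i,i)) = 1"

definition eigenvalue_vector :: "complex mat \<Rightarrow> real list \<Rightarrow> bool" where
  "eigenvalue_vector M lam \<longleftrightarrow>
     char_poly M = (\<Prod>x\<leftarrow>lam. [:- complex_of_real x, 1:])"

(* orthonormal basis of C^N given as e 0, ..., e (N-1) *)
definition orthonormal_basis :: "nat \<Rightarrow> (nat \<Rightarrow> complex vec) \<Rightarrow> bool" where
  "orthonormal_basis N e \<longleftrightarrow> (\<forall>i<N. e i \<in> carrier_vec N)
     \<and> (\<forall>i<N. \<forall>j<N. braket (e i) (e j) = (if i = j then 1 else 0))"

(* singular values of an n x m matrix A: the min(n,m) nonnegative numbers s_k
   (in nonincreasing order) whose squares, together with m - min(n,m) zeros,
   are the eigenvalues (with multiplicity) of A^* A *)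
definition singular_values :: "complex mat \<Rightarrow> real list" where
  "singular_values A = (SOME s. length s = min (dim_row A) (dim_col A)
      \<and> sorted (rev s) \<and> (\<forall>x\<in>set s. x \<ge> 0)
      \<and> char_poly (ctrans A * A) =
          (\<Prod>x\<leftarrow>s. [:- complex_of_real (x^2), 1:]) * [:0, 1:] ^ (dim_col A - length s))"

definition sort_desc :: "real list \<Rightarrow> real list" where
  "sort_desc xs = rev (sort xs)"

definition pad :: "nat \<Rightarrow> real list \<Rightarrow> real list" where
  "pad k xs = xs @ replicate (k - length xs) 0"

definition dotp :: "real list \<Rightarrow> real list \<Rightarrow> real" where
  "dotp xs ys = (let k = max (length xs) (length ys) in
      sum_list (map2 (*) (pad k xs) (pad k ys)))"

end

theory Submission
  imports Defs "HOL-Combinatorics.Permutations"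
begin

definition herm :: "nat \<Rightarrow> complex mat \<Rightarrow> bool" where
  "herm n H \<longleftrightarrow> H \<in> carrier_mat n n \<and> (\<forall>i<n. \<forall>j<n. H $$ (i,j) = cnj (H $$ (j,i)))"

definition unitary :: "nat \<Rightarrow> complex mat \<Rightarrow> bool" where
  "unitary n U \<longleftrightarrow> U \<in> carrier_mat n n \<and> ctrans U * U = 1\<^sub>m n"

lemma ctrans_carrier[simp]: "A \<in> carrier_mat r c \<Longrightarrow> ctrans A \<in> carrier_mat c r"
  by (auto simp: ctrans_def)

lemma ctrans_dims[simp]: "dim_row (ctrans A) = dim_col A" "dim_col (ctrans A) = dim_row A"
  by (auto simp: ctrans_def)

lemma ctrans_index[simp]: "i < dim_col A \<Longrightarrow> j < dim_row A \<Longrightarrow> ctrans A $$ (i,j) = cnj (A $$ (j,i))"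
  by (auto simp: ctrans_def)

lemma ctrans_ctrans[simp]: "ctrans (ctrans A) = A"
  by (rule eq_matI, auto)

lemma ctrans_mult: assumes "A \<in> carrier_mat r k" "B \<in> carrier_mat k c"
  shows "ctrans (A * B) = ctrans B * ctrans A"
  using assms by (intro eq_matI) (auto simp: scalar_prod_def ac_simps)

lemma ctrans_one[simp]: "ctrans (1\<^sub>m n) = 1\<^sub>m n"
  by (rule eq_matI, auto)

lemma braket_sprod: "braket a b = b \<bullet>c a"
  unfolding braket_def scalar_prod_def by (auto simp: ac_simps atLeast0LessThan)

lemma braket_alt: "braket a b = (\<Sum>k<dim_vec a. cnj (a $ k) * b $ k)" by (simp add: braket_def)

lemma braket_mult_vec: assumes M: "M \<in> carrier_mat r c" and x: "x \<in> carrier_vec r" and y: "y \<in> carrier_vec c"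
  shows "braket x (M *\<^sub>v y) = braket (ctrans M *\<^sub>v x) y"
proof -
  have "braket x (M *\<^sub>v y) = (\<Sum>i<r. cnj (x $ i) * (\<Sum>j<c. M $$ (i,j) * y $ j))"
    using M x y by (simp add: braket_def scalar_prod_def atLeast0LessThan)
  also have "\<dots> = (\<Sum>i<r. \<Sum>j<c. cnj (x $ i) * M $$ (i,j) * y $ j)"
    by (simp add: sum_distrib_left ac_simps)
  also have "\<dots> = (\<Sum>j<c. \<Sum>i<r. cnj (x $ i) * M $$ (i,j) * y $ j)"
    by (rule sum.swap)
  also have "\<dots> = braket (ctrans M *\<^sub>v x) y"
    using M x y by (simp add: braket_def scalar_prod_def atLeast0LessThan sum_distrib_right sum_distrib_left ac_simps)
  finally show ?thesis .
qed

lemma braket_cnj: "dim_vec a = dim_vec b \<Longrightarrow> braket b a = cnj (braket a b)"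
  unfolding braket_def by (simp add: ac_simps)

lemma braket_self_real: "braket a a = of_real (\<Sum>k<dim_vec a. (cmod (a $ k))^2)"
  unfolding braket_def of_real_sum by (intro sum.cong refl, metis complex_norm_square mult.commute)

lemma braket_self_ge0: "Re (braket a a) \<ge> 0" "Im (braket a a) = 0"
  unfolding braket_self_real by (auto intro: sum_nonneg)

lemma braket_self_eq0: assumes "braket a a = 0" shows "a = 0\<^sub>v (dim_vec a)"
proof -
  have "(\<Sum>k<dim_vec a. (cmod (a $ k))^2) = 0" using assms unfolding braket_self_real of_real_eq_0_iff .
  hence "\<forall>k\<in>{..<dim_vec a}. (cmod (a $ k))^2 = 0" by (subst sum_nonneg_eq_0_iff[symmetric], auto)
  thus ?thesis by (intro eq_vecI, auto)
qed

lemma braket_add_right: "dim_vec b = dim_vec a \<Longrightarrow> dim_vec c = dim_vec a \<Longrightarrow> braket a (b + c) = braket a b + braket a c"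
  unfolding braket_def by (simp add: sum.distrib distrib_left)

lemma braket_smult_right: "dim_vec b = dim_vec a \<Longrightarrow> braket a (k \<cdot>\<^sub>v b) = k * braket a b"
  unfolding braket_def by (simp add: sum_distrib_left ac_simps)

lemma braket_smult_left: "braket (k \<cdot>\<^sub>v a) b = cnj k * braket a b"
  unfolding braket_def by (simp add: sum_distrib_left ac_simps)

lemma braket_minus_right: "dim_vec b = dim_vec a \<Longrightarrow> dim_vec c = dim_vec a \<Longrightarrow> braket a (b - c) = braket a b - braket a c"
  unfolding braket_def by (simp add: sum_subtractf right_diff_distrib)

lemma braket_minus_left: "dim_vec a = dim_vec c \<Longrightarrow> braket (a - c) b = braket a b - braket c b"
  unfolding braket_def by (simp add: sum_subtractf left_diff_distrib)

lemma unitary_inv: assumes "unitary n U" shows "U * ctrans U = 1\<^sub>m n"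
  using assms mat_mult_left_right_inverse[of "ctrans U" n U] unfolding unitary_def by auto

lemma braket_unitary: assumes "unitary n U" "x \<in> carrier_vec n" "y \<in> carrier_vec n"
  shows "braket (ctrans U *\<^sub>v x) (ctrans U *\<^sub>v y) = braket x y"
proof -
  have U: "U \<in> carrier_mat n n" using assms unfolding unitary_def by auto
  have "braket (ctrans U *\<^sub>v x) (ctrans U *\<^sub>v y) = braket x (U *\<^sub>v (ctrans U *\<^sub>v y))"
    using braket_mult_vec[OF U assms(2) mult_mat_vec_carrier[OF ctrans_carrier[OF U] assms(3)]] by simp

  also have "U *\<^sub>v (ctrans U *\<^sub>v y) = y"
    using unitary_inv[OF assms(1)] U assms(3)
    by (metis assoc_mult_mat_vec ctrans_carrier one_mult_mat_vec)
  finally show ?thesis .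
qed

definition onl :: "nat \<Rightarrow> complex vec list \<Rightarrow> bool" where
  "onl n ws \<longleftrightarrow> set ws \<subseteq> carrier_vec n \<and>
     (\<forall>i<length ws. \<forall>j<length ws. braket (ws!i) (ws!j) = (if i = j then 1 else 0))"

lemma exists_orth_vec: assumes ws: "set ws \<subseteq> carrier_vec n" and len: "length ws < n"
  shows "\<exists>v. v \<in> carrier_vec n \<and> v \<noteq> 0\<^sub>v n \<and> (\<forall>w\<in>set ws. braket w v = 0)"
proof -
  define c where "c = (\<lambda>i. if i < length ws then conjugate (ws!i) else 0\<^sub>v n)"
  define R where "R = mat\<^sub>r n n (\<lambda>i. if i = n - 1 then 0\<^sub>v n else c i)"
  have c: "c \<in> {0..<n} \<rightarrow> carrier_vec n"
  proof
    fix i assume "i \<in> {0..<n}"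
    show "c i \<in> carrier_vec n"
    proof (cases "i < length ws")
      case True hence "ws ! i \<in> carrier_vec n" using ws nth_mem[OF True] by auto
      thus ?thesis using True unfolding c_def by auto
    qed (auto simp: c_def)
  qed
  have "det R = 0" unfolding R_def by (rule det_row_0[OF _ c], insert len, auto)
  moreover have R: "R \<in> carrier_mat n n" unfolding R_def by auto
  ultimately obtain v where v: "v \<in> carrier_vec n" "v \<noteq> 0\<^sub>v n" "R *\<^sub>v v = 0\<^sub>v n"
    using det_0_iff_vec_prod_zero[OF R] by auto
  have "braket w v = 0" if w: "w \<in> set ws" for w
  proof -
    from w obtain i where i: "i < length ws" and wi: "w = ws ! i" by (auto simp: in_set_conv_nth)
    have i1: "i < n - 1" "i < n" using i len by auto
    have "(R *\<^sub>v v) $ i = 0" using v(3) i1 by simp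
    hence "row R i \<bullet> v = 0" using R i1 by simp
    moreover have "row R i = conjugate w"
    proof -
      have "w \<in> carrier_vec n" using w ws by auto
      thus ?thesis using i1 i wi unfolding R_def c_def by (subst row_mat_of_row_fun, auto)
    qed
    ultimately have "conjugate w \<bullet> v = 0" by simp
    moreover have "w \<in> carrier_vec n" using w ws by auto
    ultimately show ?thesis using v(1) unfolding braket_def scalar_prod_def by (auto simp: atLeast0LessThan)
  qed
  thus ?thesis using v by auto
qed

lemma normalize_vec: assumes v: "v \<in> carrier_vec n" "v \<noteq> 0\<^sub>v n"
  shows "\<exists>c. c \<noteq> 0 \<and> braket (c \<cdot>\<^sub>v v) (c \<cdot>\<^sub>v v) = 1"
proof -
  have "braket v v \<noteq> 0" using braket_self_eq0[of v] v by auto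
  obtain r where r: "braket v v = of_real r" using braket_self_real by blast
  have r0: "r > 0" using braket_self_ge0[of v] r \<open>braket v v \<noteq> 0\<close>
    by (metis Re_complex_of_real less_eq_real_def of_real_0)
  define c where "c = complex_of_real (1 / sqrt r)"
  have "braket (c \<cdot>\<^sub>v v) (c \<cdot>\<^sub>v v) = cnj c * c * braket v v"
    by (simp add: braket_smult_left braket_smult_right)
  also have "\<dots> = 1"
  proof -
    have "(1 / sqrt r) * (1 / sqrt r) * r = 1" using r0 by (simp add: field_simps)
    hence "complex_of_real ((1 / sqrt r) * (1 / sqrt r) * r) = 1" by simp
    thus ?thesis unfolding c_def r by (simp only: of_real_mult complex_cnj_complex_of_real)
  qed
  finally show ?thesis using r0 unfolding c_def by (intro exI[of _ c], auto simp: c_def)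
qed

lemma onl_extend1: assumes o: "onl n ws" and len: "length ws < n"
  shows "\<exists>v. onl n (ws @ [v])"
proof -
  have ws: "set ws \<subseteq> carrier_vec n" using o unfolding onl_def by auto
  obtain v where v: "v \<in> carrier_vec n" "v \<noteq> 0\<^sub>v n" and orth: "\<forall>w\<in>set ws. braket w v = 0"
    using exists_orth_vec[OF ws len] by auto
  obtain c where c: "c \<noteq> 0" "braket (c \<cdot>\<^sub>v v) (c \<cdot>\<^sub>v v) = 1" using normalize_vec[OF v] by auto
  define u where "u = c \<cdot>\<^sub>v v"
  have u: "u \<in> carrier_vec n" unfolding u_def using v by auto
  have orth': "braket w u = 0" if "w \<in> set ws" for w
    using orth that ws v unfolding u_def by (subst braket_smult_right, auto)
  have orth'': "braket u w = 0" if "w \<in> set ws" for w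
    using braket_cnj[of w u] orth'[OF that] that ws u by auto
  show ?thesis
    unfolding onl_def
  proof (intro exI[of _ u] conjI allI impI)
    show "set (ws @ [u]) \<subseteq> carrier_vec n" using ws u by auto
    fix i j assume i: "i < length (ws @ [u])" and j: "j < length (ws @ [u])"
    show "braket ((ws @ [u]) ! i) ((ws @ [u]) ! j) = (if i = j then 1 else 0)"
    proof (cases "i < length ws")
      case True note i' = this
      show ?thesis
      proof (cases "j < length ws")
        case True thus ?thesis using o i' unfolding onl_def by (auto simp: nth_append)
      next
        case False hence "j = length ws" using j by auto
        thus ?thesis using i' orth' by (auto simp: nth_append)
      qed
    next
      case False hence ii: "i = length ws" using i by auto
      show ?thesis
      proof (cases "j < length ws")
        case True thus ?thesis using ii orth'' by (auto simp: nth_append)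
      next
        case False hence "j = length ws" using j by auto
        thus ?thesis using ii c unfolding u_def by (auto simp: nth_append)
      qed
    qed
  qed
qed

lemma onl_extend: assumes "onl n ws" "length ws \<le> n"
  shows "\<exists>ws'. onl n (ws @ ws') \<and> length (ws @ ws') = n"
  using assms
proof (induction "n - length ws" arbitrary: ws)
  case 0 thus ?case by (intro exI[of _ "[]"], auto)
next
  case (Suc k)
  have "length ws < n" using Suc(2) by arith
  then obtain v where v: "onl n (ws @ [v])" using onl_extend1[OF Suc(3)] by auto
  have k: "k = n - length (ws @ [v])" using Suc(2) by simp
  obtain ws' where "onl n ((ws @ [v]) @ ws')" "length ((ws @ [v]) @ ws') = n"
    using Suc(1)[OF k v] \<open>length ws < n\<close> by auto
  thus ?case by (intro exI[of _ "v # ws'"], auto)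
qed

lemma unitary_of_onl: assumes "onl n ws" "length ws = n"
  shows "unitary n (mat_of_cols n ws)"
  unfolding unitary_def
proof
  show C: "mat_of_cols n ws \<in> carrier_mat n n" using assms by auto
  show "ctrans (mat_of_cols n ws) * mat_of_cols n ws = 1\<^sub>m n"
  proof (rule eq_matI)
    fix i j assume i: "i < dim_row (1\<^sub>m n)" and j: "j < dim_col (1\<^sub>m n)"
    have wi: "ws ! i \<in> carrier_vec n" "ws ! j \<in> carrier_vec n" using assms i j unfolding onl_def by auto
    have "(ctrans (mat_of_cols n ws) * mat_of_cols n ws) $$ (i,j) = braket (ws ! i) (ws ! j)"
      using C i j wi assms
      by (simp add: scalar_prod_def braket_def mat_of_cols_def atLeast0LessThan)
    thus "(ctrans (mat_of_cols n ws) * mat_of_cols n ws) $$ (i,j) = 1\<^sub>m n $$ (i,j)"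
      using assms i j unfolding onl_def by auto
  qed (insert C, auto)
qed

lemma unitary_with_col0: assumes v: "v \<in> carrier_vec n" "braket v v = 1"
  shows "\<exists>W. unitary n W \<and> col W 0 = v"
proof -
  have n: "n > 0" using v by (cases n, auto simp: braket_def)
  have "onl n [v]" using v unfolding onl_def by auto
  then obtain ws' where o: "onl n ([v] @ ws')" "length ([v] @ ws') = n"
    using onl_extend[of n "[v]"] n by auto
  show ?thesis
    by (intro exI[of _ "mat_of_cols n (v # ws')"], insert unitary_of_onl[OF o] o n v, auto)
qed

definition dmat :: "nat \<Rightarrow> (nat \<Rightarrow> real) \<Rightarrow> complex mat" where
  "dmat n d = mat n n (\<lambda>(i,j). if i = j then complex_of_real (d i) else 0)"

lemma dmat_carrier[simp]: "dmat n d \<in> carrier_mat n n" by (simp add: dmat_def)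
lemma dmat_dims[simp]: "dim_row (dmat n d) = n" "dim_col (dmat n d) = n" by (auto simp add: dmat_def)

lemma herm_ctrans: assumes "herm n H" shows "ctrans H = H"
proof -
  have H: "H \<in> carrier_mat n n" and h: "\<And>i j. i < n \<Longrightarrow> j < n \<Longrightarrow> H $$ (j,i) = cnj (H $$ (i,j))"
    using assms unfolding herm_def by blast+
  show ?thesis
  proof (rule eq_matI)
    fix i j assume "i < dim_row H" "j < dim_col H"
    thus "ctrans H $$ (i, j) = H $$ (i, j)" using H h[of j i] by simp
  qed (insert H, auto)
qed

lemma herm_of_ctrans: assumes "H \<in> carrier_mat n n" "ctrans H = H" shows "herm n H"
  unfolding herm_def
proof (intro conjI allI impI)
  fix i j assume "i < n" "j < n"
  thus "H $$ (i,j) = cnj (H $$ (j,i))" using assms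
    by (metis ctrans_index carrier_matD)
qed (insert assms, auto)

lemma ctrans_mult_gen: assumes "dim_col A = dim_row B" shows "ctrans (A * B) = ctrans B * ctrans A"
proof -
  have A: "A \<in> carrier_mat (dim_row A) (dim_col A)" unfolding carrier_mat_def by blast
  have B: "B \<in> carrier_mat (dim_col A) (dim_col B)" unfolding carrier_mat_def using assms by simp
  show ?thesis by (rule ctrans_mult[OF A B])
qed

lemma assoc_gen: assumes "dim_col A = dim_row B" "dim_col B = dim_row C" shows "A * B * C = A * (B * C)"
proof -
  have A: "A \<in> carrier_mat (dim_row A) (dim_col A)" unfolding carrier_mat_def by blast
  have B: "B \<in> carrier_mat (dim_col A) (dim_col B)" unfolding carrier_mat_def using assms by simp
  have C: "C \<in> carrier_mat (dim_col B) (dim_col C)" unfolding carrier_mat_def using assms by simp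
  show ?thesis by (rule assoc_mult_mat[OF A B C])
qed

lemma unitaryD: assumes "unitary n U"
  shows "U \<in> carrier_mat n n" "ctrans U * U = 1\<^sub>m n" "U * ctrans U = 1\<^sub>m n"
  using assms unitary_inv unfolding unitary_def by auto

lemma spectral_step:
  assumes H: "herm (Suc k) H"
    and IH: "\<And>H'. herm k H' \<Longrightarrow> \<exists>U d. unitary k U \<and> H' = U * dmat k d * ctrans U"
  shows "\<exists>U d. unitary (Suc k) U \<and> H = U * dmat (Suc k) d * ctrans U"
proof -
  let ?n = "Suc k"
  have Hc: "H \<in> carrier_mat ?n ?n" using H unfolding herm_def by blast
  have Hs: "ctrans H = H" using herm_ctrans[OF H] .
  obtain as where cp: "char_poly H = (\<Prod>a\<leftarrow>as. [:- a, 1:])" and las: "length as = ?n"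
    using char_poly_factorized[OF Hc] by auto
  obtain e as' where as: "as = e # as'" using las by (cases as, auto)
  have "poly (char_poly H) e = 0" unfolding cp as by simp
  hence ev: "eigenvalue H e" using eigenvalue_root_char_poly[OF Hc] by simp
  obtain v where "eigenvector H v e" using ev unfolding eigenvalue_def by auto
  hence v: "v \<in> carrier_vec ?n" "v \<noteq> 0\<^sub>v ?n" and Hv: "H *\<^sub>v v = e \<cdot>\<^sub>v v"
    using Hc unfolding eigenvector_def by auto
  obtain c where c: "braket (c \<cdot>\<^sub>v v) (c \<cdot>\<^sub>v v) = 1" using normalize_vec[OF v] by auto
  define u where "u = c \<cdot>\<^sub>v v"
  have u: "u \<in> carrier_vec ?n" and uu: "braket u u = 1" using v c unfolding u_def by auto
  have Hu: "H *\<^sub>v u = e \<cdot>\<^sub>v u" unfolding u_def using Hv v Hc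
    by (metis mult_mat_vec smult_smult_assoc mult.commute)
  have "braket u (H *\<^sub>v u) = e" using Hu uu u by (simp add: braket_smult_right)
  moreover have "braket u (H *\<^sub>v u) = cnj e"
    using braket_mult_vec[OF Hc u u] Hs Hu uu by (simp add: braket_smult_left)
  ultimately have ecnj: "cnj e = e" by simp
  define r where "r = Re e"
  have er: "e = complex_of_real r" using arg_cong[OF ecnj, of Im] unfolding r_def by (simp add: complex_eq_iff)
  obtain W where W: "unitary ?n W" and W0: "col W 0 = u" using unitary_with_col0[OF u uu] by auto
  have Wc: "W \<in> carrier_mat ?n ?n" and WW: "ctrans W * W = 1\<^sub>m ?n" and WW': "W * ctrans W = 1\<^sub>m ?n"
    using unitaryD[OF W] by auto
  have Wsc: "ctrans W \<in> carrier_mat ?n ?n" using Wc by auto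
  define K where "K = ctrans W * H * W"
  have Kc: "K \<in> carrier_mat ?n ?n" unfolding K_def using Wc Hc by auto
  have Ks: "ctrans K = K" unfolding K_def using Wc Hc Hs Wsc
    by (simp add: ctrans_mult_gen assoc_mult_mat[OF Wsc Hc Wc])
  have HK: "H = W * K * ctrans W"
  proof -
    have "W * K * ctrans W = (W * ctrans W) * H * (W * ctrans W)"
      unfolding K_def using Wc Hc by (simp add: assoc_gen)
    thus ?thesis using WW' Hc by simp
  qed
  have Kcol: "K $$ (i, 0) = (if i = 0 then e else 0)" if i: "i < ?n" for i
  proof -
    have "col K 0 = (ctrans W * H) *\<^sub>v col W 0" unfolding K_def
      by (rule col_mult2[of _ ?n ?n], insert Wc Hc, auto)
    also have "\<dots> = ctrans W *\<^sub>v (H *\<^sub>v col W 0)"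
      by (rule assoc_mult_mat_vec[of _ ?n ?n _ ?n], insert Wc Hc u W0, auto)
    also have "\<dots> = e \<cdot>\<^sub>v (ctrans W *\<^sub>v col W 0)" unfolding W0 Hu using Wc u by auto
    also have "ctrans W *\<^sub>v col W 0 = col (ctrans W * W) 0" using col_mult2[OF Wsc Wc, of 0] by simp
    also have "\<dots> = col (1\<^sub>m ?n) 0" unfolding WW ..
    finally have "col K 0 = e \<cdot>\<^sub>v col (1\<^sub>m ?n) 0" .
    hence "col K 0 $ i = (e \<cdot>\<^sub>v col (1\<^sub>m ?n) 0) $ i" by simp
    thus ?thesis using i Kc by auto
  qed
  have Kherm: "K $$ (i,j) = cnj (K $$ (j,i))" if "i < ?n" "j < ?n" for i j
    using herm_of_ctrans[OF Kc Ks] that unfolding herm_def by blast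
  have Krow: "K $$ (0, j) = (if j = 0 then e else 0)" if j: "j < ?n" for j
  proof -
    have "K $$ (0, j) = cnj (K $$ (j, 0))" by (rule Kherm, insert j, auto)
    thus ?thesis using Kcol[OF j] ecnj by auto
  qed
  define H' where "H' = mat k k (\<lambda>(i,j). K $$ (Suc i, Suc j))"
  have H': "herm k H'" unfolding herm_def H'_def
    by (simp, intro allI impI, rule Kherm, auto)
  obtain U' d' where U': "unitary k U'" and H'U: "H' = U' * dmat k d' * ctrans U'"
    using IH[OF H'] by auto
  have U'c: "U' \<in> carrier_mat k k" and U'U: "ctrans U' * U' = 1\<^sub>m k"
    using unitaryD[OF U'] by auto
  define E where "E = mat 1 1 (\<lambda>_. e)"
  have Ec: "E \<in> carrier_mat 1 1" unfolding E_def by auto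
  define B where "B = four_block_mat (1\<^sub>m 1) (0\<^sub>m 1 k) (0\<^sub>m k 1) U'"
  have Bc: "B \<in> carrier_mat ?n ?n" unfolding B_def using U'c by auto
  have Bs: "ctrans B = four_block_mat (1\<^sub>m 1) (0\<^sub>m 1 k) (0\<^sub>m k 1) (ctrans U')"
    unfolding B_def using U'c by (intro eq_matI, auto)
  have BB: "ctrans B * B = 1\<^sub>m ?n" unfolding Bs unfolding B_def
    by (subst mult_four_block_mat[of _ 1 1 _ k _ k _ _ 1 _ k], insert U'c U'U, auto)
  define d where "d = (\<lambda>i. if i = 0 then r else d' (i - 1))"
  have Dblock: "dmat ?n d = four_block_mat E (0\<^sub>m 1 k) (0\<^sub>m k 1) (dmat k d')"
    unfolding E_def d_def dmat_def er by (intro eq_matI, auto)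
  have KB: "K = B * dmat ?n d * ctrans B"
  proof -
    have "B * dmat ?n d = four_block_mat E (0\<^sub>m 1 k) (0\<^sub>m k 1) (U' * dmat k d')"
      unfolding Dblock B_def
      by (subst mult_four_block_mat[of _ 1 1 _ k _ k _ _ 1 _ k], insert U'c Ec, auto)
    also have "\<dots> * ctrans B = four_block_mat E (0\<^sub>m 1 k) (0\<^sub>m k 1) (U' * dmat k d' * ctrans U')"
      unfolding Bs
      by (subst mult_four_block_mat[of _ 1 1 _ k _ k _ _ 1 _ k], insert U'c Ec, auto)
    also have "\<dots> = K" unfolding H'U[symmetric]
      by (rule eq_matI, insert Kc Kcol Krow, auto simp: E_def H'_def)
    finally show ?thesis by simp
  qed
  define U where "U = W * B"
  have Uc: "U \<in> carrier_mat ?n ?n" unfolding U_def using Wc Bc by auto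
  have "ctrans U * U = ctrans B * (ctrans W * W) * B"
    unfolding U_def using Wc Bc by (simp add: ctrans_mult_gen assoc_gen)
  also have "\<dots> = 1\<^sub>m ?n" unfolding WW using BB Bc by simp
  finally have U: "unitary ?n U" unfolding unitary_def using Uc by auto
  have "H = U * dmat ?n d * ctrans U"
    unfolding HK KB U_def using Wc Bc by (simp add: ctrans_mult_gen assoc_gen)
  thus ?thesis using U by auto
qed

lemma spectral: assumes "herm n H"
  shows "\<exists>U d. unitary n U \<and> H = U * dmat n d * ctrans U"
  using assms
proof (induction n arbitrary: H)
  case 0
  hence "H \<in> carrier_mat 0 0" unfolding herm_def by blast
  thus ?case by (intro exI[of _ "1\<^sub>m 0"], auto simp: unitary_def intro!: eq_matI)
next
  case (Suc k)
  show ?case by (rule spectral_step[OF Suc(2) Suc(1)])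
qed

lemma char_poly_dmat: assumes "unitary n U" "H = U * dmat n d * ctrans U"
  shows "char_poly H = (\<Prod>i\<leftarrow>[0..<n]. [:- complex_of_real (d i), 1:])"
proof -
  have U: "U \<in> carrier_mat n n" "U * ctrans U = 1\<^sub>m n" "ctrans U * U = 1\<^sub>m n" using unitaryD[OF assms(1)] by auto
  have "similar_mat H (dmat n d)"
    by (rule similar_matI[of _ _ U "ctrans U" n], insert U assms(2), auto)
  hence "char_poly H = char_poly (dmat n d)" by (rule char_poly_similar)
  also have "\<dots> = (\<Prod>a\<leftarrow>diag_mat (dmat n d). [:- a, 1:])"
    by (rule char_poly_upper_triangular[of _ n], auto simp: dmat_def upper_triangular_def)
  also have "diag_mat (dmat n d) = map (\<lambda>i. complex_of_real (d i)) [0..<n]"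
    unfolding diag_mat_def dmat_def by auto
  finally show ?thesis by (simp add: o_def)
qed

lemma block_det_G: fixes y :: "'b :: idom"
  assumes B: "B \<in> carrier_mat m n" and C: "C \<in> carrier_mat n m"
  shows "det (four_block_mat (y \<cdot>\<^sub>m 1\<^sub>m m) B C (y \<cdot>\<^sub>m 1\<^sub>m n)) * y ^ m
       = det (y * y \<cdot>\<^sub>m 1\<^sub>m m - B * C) * y ^ n"
proof -
  let ?M = "four_block_mat (y \<cdot>\<^sub>m 1\<^sub>m m) B C (y \<cdot>\<^sub>m 1\<^sub>m n)"
  let ?N = "four_block_mat (y \<cdot>\<^sub>m 1\<^sub>m m) (0\<^sub>m m n) (- C) (1\<^sub>m n)"
  have M: "?M \<in> carrier_mat (m+n) (m+n)" using B C by auto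
  have N: "?N \<in> carrier_mat (m+n) (m+n)" using B C by auto
  have MN: "?M * ?N = four_block_mat (y * y \<cdot>\<^sub>m 1\<^sub>m m - B * C) B (0\<^sub>m n m) (y \<cdot>\<^sub>m 1\<^sub>m n)"
    by (subst mult_four_block_mat[of _ m m _ n _ n _ _ m _ n], insert B C, auto)
  have "det ?M * det ?N = det (?M * ?N)" by (rule det_mult[OF M N, symmetric])
  also have "\<dots> = det (y * y \<cdot>\<^sub>m 1\<^sub>m m - B * C) * det (y \<cdot>\<^sub>m 1\<^sub>m n)"
    unfolding MN by (rule det_four_block_mat_lower_left_zero, insert B C, auto)
  also have "det ?N = det (y \<cdot>\<^sub>m 1\<^sub>m m) * det (1\<^sub>m n)"
    by (rule det_four_block_mat_upper_right_zero, insert C, auto)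
  finally show ?thesis by (simp add: mult.commute)
qed

lemma sylvester_det: fixes x :: "'b :: idom"
  assumes B: "B \<in> carrier_mat m n" and C: "C \<in> carrier_mat n m"
  shows "x ^ n * det (x \<cdot>\<^sub>m 1\<^sub>m m - B * C) = x ^ m * det (x \<cdot>\<^sub>m 1\<^sub>m n - C * B)"
proof -
  let ?M = "four_block_mat (x \<cdot>\<^sub>m 1\<^sub>m m) B C (1\<^sub>m n)"
  let ?N1 = "four_block_mat (1\<^sub>m m) (0\<^sub>m m n) (- C) (1\<^sub>m n)"
  let ?N2 = "four_block_mat (1\<^sub>m m) (0\<^sub>m m n) (- C) (x \<cdot>\<^sub>m 1\<^sub>m n)"
  have M: "?M \<in> carrier_mat (m+n) (m+n)" using B C by auto
  have N1: "?N1 \<in> carrier_mat (m+n) (m+n)" using B C by auto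
  have N2: "?N2 \<in> carrier_mat (m+n) (m+n)" using B C by auto
  have MN1: "?M * ?N1 = four_block_mat (x \<cdot>\<^sub>m 1\<^sub>m m - B * C) B (0\<^sub>m n m) (1\<^sub>m n)"
    by (subst mult_four_block_mat[of _ m m _ n _ n _ _ m _ n], insert B C, auto)
  have N2M: "?N2 * ?M = four_block_mat (x \<cdot>\<^sub>m 1\<^sub>m m) B (0\<^sub>m n m) (x \<cdot>\<^sub>m 1\<^sub>m n - C * B)"
    by (subst mult_four_block_mat[of _ m m _ n _ n _ _ m _ n], insert B C, auto)
  have "det ?M * det ?N1 = det (?M * ?N1)" by (rule det_mult[OF M N1, symmetric])
  also have "\<dots> = det (x \<cdot>\<^sub>m 1\<^sub>m m - B * C) * det (1\<^sub>m n)"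
    unfolding MN1 by (rule det_four_block_mat_lower_left_zero, insert B C, auto)
  also have "det ?N1 = det (1\<^sub>m m) * det (1\<^sub>m n)"
    by (rule det_four_block_mat_upper_right_zero, insert C, auto)
  finally have e1: "det ?M = det (x \<cdot>\<^sub>m 1\<^sub>m m - B * C)" by simp
  have "det ?N2 * det ?M = det (?N2 * ?M)" by (rule det_mult[OF N2 M, symmetric])
  also have "\<dots> = det (x \<cdot>\<^sub>m 1\<^sub>m m) * det (x \<cdot>\<^sub>m 1\<^sub>m n - C * B)"
    unfolding N2M by (rule det_four_block_mat_lower_left_zero, insert B C, auto)
  also have "det ?N2 = det (1\<^sub>m m) * det (x \<cdot>\<^sub>m 1\<^sub>m n)"
    by (rule det_four_block_mat_upper_right_zero, insert C, auto)
  finally show ?thesis unfolding e1 by simp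
qed

lemma count_prod_linear: fixes as :: "'a :: field list"
  shows "order a (\<Prod>x\<leftarrow>as. [:- x, 1:]) = count (mset as) a"
proof (induction as)
  case Nil thus ?case by simp
next
  case (Cons b as)
  have "order a ([:- b, 1:] * (\<Prod>x\<leftarrow>as. [:- x, 1:])) = order a [:- b, 1:] + order a (\<Prod>x\<leftarrow>as. [:- x, 1:])"
  proof (rule order_mult)
    have nz: "(\<Prod>x\<leftarrow>as. [:- x, 1:]) \<noteq> 0" by (subst prod_list_zero_iff, auto)
    show "[:- b, 1:] * (\<Prod>x\<leftarrow>as. [:- x, 1:]) \<noteq> 0"
      using nz by (metis mult_eq_0_iff pCons_eq_0_iff one_neq_zero)
  qed
  also have "order a [:- b, 1:] = (if b = a then 1 else 0)"
    using order_power_n_n[of a 1] by (cases "b = a", auto simp: order_0I)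
  finally show ?case using Cons by auto
qed

lemma mset_from_prod_linear: fixes as bs :: "'a :: field list"
  assumes "(\<Prod>x\<leftarrow>as. [:- x, 1:]) = (\<Prod>x\<leftarrow>bs. [:- x, 1:])"
  shows "mset as = mset bs"
  by (rule multiset_eqI, metis count_prod_linear assms)

lemma weighted_top: fixes y d :: "nat \<Rightarrow> real"
  assumes anti: "\<And>i j. i \<le> j \<Longrightarrow> j < L \<Longrightarrow> y j \<le> y i"
    and ynn: "\<And>i. i < L \<Longrightarrow> y i \<ge> 0"
    and d01: "\<And>i. i < L \<Longrightarrow> 0 \<le> d i \<and> d i \<le> 1"
    and dsum: "(\<Sum>i<L. d i) \<le> real r"
  shows "(\<Sum>i<L. y i * d i) \<le> (\<Sum>i<min r L. y i)"
proof (cases "r < L")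
  case False
  hence "min r L = L" by auto
  thus ?thesis using d01 ynn by (auto intro!: sum_mono simp: mult_left_le)
next
  case True
  hence m: "min r L = r" by auto
  have split: "{..<L} = {..<r} \<union> {r..<L}" using True by auto
  have "(\<Sum>i<L. y i * d i) - (\<Sum>i<r. y i) = (\<Sum>i<r. y i * (d i - 1)) + (\<Sum>i\<in>{r..<L}. y i * d i)"
    unfolding split by (subst sum.union_disjoint, auto simp: algebra_simps sum_subtractf)
  also have "\<dots> \<le> (\<Sum>i<r. y r * (d i - 1)) + (\<Sum>i\<in>{r..<L}. y r * d i)"
  proof (rule add_mono; rule sum_mono)
    fix i assume "i \<in> {..<r}"
    hence "i \<le> r" "i < L" using True by auto
    thus "y i * (d i - 1) \<le> y r * (d i - 1)" using anti[of i r] True d01[of i]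
      by (intro mult_right_mono_neg, auto)
  next
    fix i assume "i \<in> {r..<L}"
    thus "y i * d i \<le> y r * d i" using anti[of r i] d01[of i] by (intro mult_right_mono, auto)
  qed
  also have "\<dots> = y r * ((\<Sum>i<L. d i) - real r)"
    unfolding split by (subst sum.union_disjoint, auto simp: algebra_simps sum_subtractf sum_distrib_left)
  also have "\<dots> \<le> 0" using dsum ynn[OF True] by (intro mult_nonneg_nonpos, auto)
  finally show ?thesis unfolding m by simp
qed

lemma abel_ineq: fixes x z w :: "nat \<Rightarrow> real"
  assumes "\<And>i j. i \<le> j \<Longrightarrow> j < K \<Longrightarrow> x j \<le> x i"
    and "\<And>i. i < K \<Longrightarrow> x i \<ge> 0"
    and "\<And>r. r \<le> K \<Longrightarrow> (\<Sum>k<r. z k) \<le> (\<Sum>k<r. w k)"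
  shows "(\<Sum>k<K. x k * z k) \<le> (\<Sum>k<K. x k * w k)"
  using assms
proof (induction K arbitrary: x)
  case 0 thus ?case by simp
next
  case (Suc K)
  define x' where "x' = (\<lambda>k. x k - x K)"
  have IH: "(\<Sum>k<K. x' k * z k) \<le> (\<Sum>k<K. x' k * w k)"
  proof (rule Suc.IH)
    fix i j assume "i \<le> j" "j < K" thus "x' j \<le> x' i" using Suc.prems(1)[of i j] unfolding x'_def by auto
  next
    fix i assume "i < K" thus "x' i \<ge> 0" using Suc.prems(1)[of i K] unfolding x'_def by auto
  next
    fix r assume "r \<le> K" thus "(\<Sum>k<r. z k) \<le> (\<Sum>k<r. w k)" using Suc.prems(3)[of r] by auto
  qed
  have last: "x K * (\<Sum>k<Suc K. z k) \<le> x K * (\<Sum>k<Suc K. w k)"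
    using Suc.prems(2)[of K] Suc.prems(3)[of "Suc K"] by (intro mult_left_mono, auto)
  have eq: "(\<Sum>k<Suc K. x k * f k) = (\<Sum>k<K. x' k * f k) + x K * (\<Sum>k<Suc K. f k)" for f :: "nat \<Rightarrow> real"
    unfolding x'_def by (simp add: algebra_simps sum.distrib sum_distrib_left sum_subtractf)
  show ?case unfolding eq[of z] eq[of w] using IH last by linarith
qed

lemma ds_sorted_case: fixes x y :: "nat \<Rightarrow> real" and c :: "nat \<Rightarrow> nat \<Rightarrow> real"
  assumes xa: "\<And>i j. i \<le> j \<Longrightarrow> j < K \<Longrightarrow> x j \<le> x i"
    and xn: "\<And>i. i < K \<Longrightarrow> x i \<ge> 0"
    and ya: "\<And>i j. i \<le> j \<Longrightarrow> j < L \<Longrightarrow> y j \<le> y i"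
    and yn: "\<And>i. i < L \<Longrightarrow> y i \<ge> 0"
    and cn: "\<And>k l. k < K \<Longrightarrow> l < L \<Longrightarrow> c k l \<ge> 0"
    and rows: "\<And>k. k < K \<Longrightarrow> (\<Sum>l<L. c k l) \<le> 1"
    and cols: "\<And>l. l < L \<Longrightarrow> (\<Sum>k<K. c k l) \<le> 1"
  shows "(\<Sum>k<K. \<Sum>l<L. x k * y l * c k l) \<le> (\<Sum>k<K. x k * (if k < L then y k else 0))"
proof -
  define z where "z = (\<lambda>k. \<Sum>l<L. y l * c k l)"
  define w where "w = (\<lambda>k. if k < L then y k else 0)"
  have "(\<Sum>k<K. \<Sum>l<L. x k * y l * c k l) = (\<Sum>k<K. x k * z k)"
    unfolding z_def by (simp add: sum_distrib_left mult.assoc)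
  also have "\<dots> \<le> (\<Sum>k<K. x k * w k)"
  proof (rule abel_ineq[OF xa xn])
    fix r assume r: "r \<le> K"
    define d where "d = (\<lambda>l. \<Sum>k<r. c k l)"
    have "(\<Sum>k<r. z k) = (\<Sum>l<L. y l * d l)"
      unfolding z_def d_def by (simp add: sum_distrib_left sum.swap[of _ "{..<r}"])
    also have "\<dots> \<le> (\<Sum>i<min r L. y i)"
    proof (rule weighted_top[OF ya yn])
      fix i assume i: "i < L"
      have "d i \<le> (\<Sum>k<K. c k i)" unfolding d_def using r cn i
        by (intro sum_mono2, auto)
      thus "0 \<le> d i \<and> d i \<le> 1" using cols[OF i] cn i r unfolding d_def by (auto intro!: sum_nonneg)
    next
      have "(\<Sum>i<L. d i) = (\<Sum>k<r. \<Sum>l<L. c k l)" unfolding d_def by (rule sum.swap)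
      also have "\<dots> \<le> (\<Sum>k<r. 1)" using rows r by (intro sum_mono, auto)
      finally show "(\<Sum>i<L. d i) \<le> real r" by simp
    qed
    also have "\<dots> = (\<Sum>k<r. w k)"
    proof -
      have "(\<Sum>k<r. w k) = (\<Sum>k<min r L. w k) + (\<Sum>k\<in>{min r L..<r}. w k)"
        by (subst sum.union_disjoint[symmetric], auto intro!: sum.cong)
      also have "(\<Sum>k\<in>{min r L..<r}. w k) = 0" unfolding w_def by (rule sum.neutral, auto)
      finally show ?thesis unfolding w_def by auto
    qed
    finally show "(\<Sum>k<r. z k) \<le> (\<Sum>k<r. w k)" .
  qed
  finally show ?thesis unfolding w_def .
qed

lemma sort_desc_mset: "mset xs = mset ys \<Longrightarrow> sort_desc xs = sort_desc ys"
  unfolding sort_desc_def using properties_for_sort[of "sort ys" xs] by simp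

lemma sort_desc_props: "length (sort_desc xs) = length xs" "mset (sort_desc xs) = mset xs"
  "i \<le> j \<Longrightarrow> j < length xs \<Longrightarrow> sort_desc xs ! j \<le> sort_desc xs ! i"
proof -
  show "length (sort_desc xs) = length xs" "mset (sort_desc xs) = mset xs" unfolding sort_desc_def by auto
  assume ij: "i \<le> j" "j < length xs"
  have s: "sorted (sort xs)" by simp
  show "sort_desc xs ! j \<le> sort_desc xs ! i" unfolding sort_desc_def using ij
    by (simp add: rev_nth, intro sorted_nth_mono[OF s], auto)
qed

lemma dotp_eq: assumes "length xs = K" "length ys = L"
  shows "dotp xs ys = (\<Sum>k<K. xs ! k * (if k < L then ys ! k else 0))"
proof -
  define M where "M = max K L"
  have pad: "length (pad M zs) = M" "\<And>i. i < M \<Longrightarrow> pad M zs ! i = (if i < length zs then zs ! i else 0)"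
    if "length zs \<le> M" for zs :: "real list"
    using that unfolding pad_def by (auto simp: nth_append)
  have lx: "length xs \<le> M" "length ys \<le> M" using assms unfolding M_def by auto
  have "dotp xs ys = (\<Sum>i<M. pad M xs ! i * pad M ys ! i)"
    unfolding dotp_def Let_def M_def[symmetric] assms sum_list_sum_nth
    using pad[OF lx(1)] pad[OF lx(2)] by (simp add: atLeast0LessThan)
  also have "\<dots> = (\<Sum>i<M. (if i < K then xs ! i else 0) * (if i < L then ys ! i else 0))"
    using pad[OF lx(1)] pad[OF lx(2)] assms by (intro sum.cong, auto)
  also have "\<dots> = (\<Sum>i<K. (if i < K then xs ! i else 0) * (if i < L then ys ! i else 0))"
    by (rule sum.mono_neutral_right, auto simp: M_def)
  also have "\<dots> = (\<Sum>k<K. xs ! k * (if k < L then ys ! k else 0))" by (intro sum.cong, auto)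
  finally show ?thesis .
qed

lemma ds_ineq: fixes xs ys :: "real list" and c :: "nat \<Rightarrow> nat \<Rightarrow> real"
  assumes xn: "\<And>x. x \<in> set xs \<Longrightarrow> x \<ge> 0"
    and yn: "\<And>y. y \<in> set ys \<Longrightarrow> y \<ge> 0"
    and cn: "\<And>k l. k < length xs \<Longrightarrow> l < length ys \<Longrightarrow> c k l \<ge> 0"
    and rows: "\<And>k. k < length xs \<Longrightarrow> (\<Sum>l<length ys. c k l) \<le> 1"
    and cols: "\<And>l. l < length ys \<Longrightarrow> (\<Sum>k<length xs. c k l) \<le> 1"
  shows "(\<Sum>k<length xs. \<Sum>l<length ys. xs ! k * ys ! l * c k l) \<le> dotp (sort_desc xs) (sort_desc ys)"
proof -
  define K where "K = length xs"
  define L where "L = length ys"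
  obtain p where p: "p permutes {..<K}" and pl: "permute_list p xs = sort_desc xs"
    using mset_eq_permutation[of "sort_desc xs" xs] sort_desc_props unfolding K_def by metis
  obtain q where q: "q permutes {..<L}" and ql: "permute_list q ys = sort_desc ys"
    using mset_eq_permutation[of "sort_desc ys" ys] sort_desc_props unfolding L_def by metis
  define x where "x = (\<lambda>k. sort_desc xs ! k)"
  define y where "y = (\<lambda>k. sort_desc ys ! k)"
  have xp: "x k = xs ! p k" if "k < K" for k
    unfolding x_def pl[symmetric] using permute_list_nth[of p xs k] p that K_def by auto
  have yq: "y k = ys ! q k" if "k < L" for k
    unfolding y_def ql[symmetric] using permute_list_nth[of q ys k] q that L_def by auto
  have pK: "p k < K" if "k < K" for k using permutes_in_image[OF p] that by auto
  have qL: "q k < L" if "k < L" for k using permutes_in_image[OF q] that by auto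
  define c' where "c' = (\<lambda>k l. c (p k) (q l))"
  have "(\<Sum>k<K. \<Sum>l<L. xs ! k * ys ! l * c k l) = (\<Sum>k<K. \<Sum>l<L. xs ! p k * ys ! l * c (p k) l)"
    by (subst sum.permute[OF p], simp add: o_def)
  also have "\<dots> = (\<Sum>k<K. \<Sum>l<L. xs ! p k * ys ! q l * c (p k) (q l))"
    by (rule sum.cong[OF refl], subst sum.permute[OF q], simp add: o_def)
  also have "\<dots> = (\<Sum>k<K. \<Sum>l<L. x k * y l * c' k l)"
    unfolding c'_def using xp yq by (intro sum.cong refl, auto)
  also have "\<dots> \<le> (\<Sum>k<K. x k * (if k < L then y k else 0))"
  proof (rule ds_sorted_case)
    fix i j assume "i \<le> j" "j < K" thus "x j \<le> x i" unfolding x_def K_def by (rule sort_desc_props)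
  next
    fix i assume "i < K"
    hence "x i \<in> set xs" using xp[of i] pK[of i] unfolding K_def by auto
    thus "x i \<ge> 0" using xn by auto
  next
    fix i j assume "i \<le> j" "j < L" thus "y j \<le> y i" unfolding y_def L_def by (rule sort_desc_props)
  next
    fix i assume "i < L"
    hence "y i \<in> set ys" using yq[of i] qL[of i] unfolding L_def by auto
    thus "y i \<ge> 0" using yn by auto
  next
    fix k l assume "k < K" "l < L" thus "c' k l \<ge> 0" unfolding c'_def using cn pK qL K_def L_def by auto
  next
    fix k assume k: "k < K"
    have "(\<Sum>l<L. c' k l) = (\<Sum>l<L. c (p k) l)" unfolding c'_def
      by (subst sum.permute[OF q], simp add: o_def)
    thus "(\<Sum>l<L. c' k l) \<le> 1" using rows[of "p k"] pK[OF k] K_def L_def by auto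
  next
    fix l assume l: "l < L"
    have "(\<Sum>k<K. c' k l) = (\<Sum>k<K. c k (q l))" unfolding c'_def
      by (subst sum.permute[OF p], simp add: o_def)
    thus "(\<Sum>k<K. c' k l) \<le> 1" using cols[of "q l"] qL[OF l] K_def L_def by auto
  qed
  also have "\<dots> = dotp (sort_desc xs) (sort_desc ys)"
    unfolding x_def y_def by (subst dotp_eq[of _ K _ L], auto simp: sort_desc_props K_def L_def)
  finally show ?thesis unfolding K_def L_def .
qed

lemma mult_cnj_sq: "z * cnj z = (complex_of_real (cmod z))^2" "cnj z * z = (complex_of_real (cmod z))^2"
  by (metis complex_norm_square of_real_power, metis complex_norm_square of_real_power mult.commute)

lemma dmat_index[simp]: "i < n \<Longrightarrow> j < n \<Longrightarrow> dmat n d $$ (i,j) = (if i = j then complex_of_real (d i) else 0)"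
  by (simp add: dmat_def)

lemma dmat_mult: "dmat n a * dmat n b = dmat n (\<lambda>i. a i * b i)"
proof (rule eq_matI)
  fix i j assume ij: "i < dim_row (dmat n (\<lambda>i. a i * b i))" "j < dim_col (dmat n (\<lambda>i. a i * b i))"
  hence "(dmat n a * dmat n b) $$ (i,j) = (\<Sum>k<n. dmat n a $$ (i,k) * dmat n b $$ (k,j))"
    by (simp add: scalar_prod_def atLeast0LessThan)
  also have "\<dots> = (\<Sum>k<n. if k = i then dmat n a $$ (i,k) * dmat n b $$ (k,j) else 0)"
    using ij by (intro sum.cong, auto)
  also have "\<dots> = dmat n (\<lambda>i. a i * b i) $$ (i,j)" using ij by (simp add: sum.delta)
  finally show "(dmat n a * dmat n b) $$ (i,j) = dmat n (\<lambda>i. a i * b i) $$ (i,j)" .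
qed auto

lemma ctrans_dmat[simp]: "ctrans (dmat n a) = dmat n a"
  by (rule eq_matI, auto)

lemma mult_dmat_index: assumes A: "A \<in> carrier_mat r n" and k: "k < r" and l: "l < n"
  shows "(A * dmat n d) $$ (k,l) = A $$ (k,l) * complex_of_real (d l)"
proof -
  have "(A * dmat n d) $$ (k,l) = (\<Sum>j<n. A $$ (k,j) * dmat n d $$ (j,l))"
    using A k l by (simp add: scalar_prod_def atLeast0LessThan)
  also have "\<dots> = (\<Sum>j<n. if j = l then A $$ (k,j) * dmat n d $$ (j,l) else 0)"
    using l by (intro sum.cong, auto)
  also have "\<dots> = A $$ (k,l) * complex_of_real (d l)" using l by (simp add: sum.delta)
  finally show ?thesis .
qed

lemma quad_dmat: assumes y: "y \<in> carrier_vec n"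
  shows "braket y (dmat n d *\<^sub>v y) = complex_of_real (\<Sum>k<n. d k * (cmod (y $ k))^2)"
proof -
  have "braket y (dmat n d *\<^sub>v y) = (\<Sum>k<n. cnj (y $ k) * (\<Sum>j<n. dmat n d $$ (k,j) * y $ j))"
    using y by (simp add: braket_def scalar_prod_def atLeast0LessThan)
  also have "\<dots> = (\<Sum>k<n. cnj (y $ k) * (complex_of_real (d k) * y $ k))"
  proof (rule sum.cong[OF refl])
    fix k assume k: "k \<in> {..<n}"
    have "(\<Sum>j<n. dmat n d $$ (k,j) * y $ j) = (\<Sum>j<n. if j = k then complex_of_real (d k) * y $ j else 0)"
      using k by (intro sum.cong, auto)
    also have "\<dots> = complex_of_real (d k) * y $ k" using k by (simp add: sum.delta)
    finally show "cnj (y $ k) * (\<Sum>j<n. dmat n d $$ (k,j) * y $ j) = cnj (y $ k) * (complex_of_real (d k) * y $ k)" by simp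
  qed
  also have "\<dots> = complex_of_real (\<Sum>k<n. d k * (cmod (y $ k))^2)"
    unfolding of_real_sum
    by (intro sum.cong refl, simp add: mult_cnj_sq mult.commute mult.left_commute)
  finally show ?thesis .
qed

lemma diag_norm_row: assumes A: "A \<in> carrier_mat r c" and k: "k < r"
  shows "(A * ctrans A) $$ (k,k) = complex_of_real (\<Sum>j<c. (cmod (A $$ (k,j)))^2)"
  using A k unfolding of_real_sum
  by (simp add: scalar_prod_def atLeast0LessThan, intro sum.cong refl, simp add: mult_cnj_sq)

lemma diag_norm_col: assumes A: "A \<in> carrier_mat r c" and l: "l < c"
  shows "(ctrans A * A) $$ (l,l) = complex_of_real (\<Sum>k<r. (cmod (A $$ (k,l)))^2)"
  using A l unfolding of_real_sum
  by (simp add: scalar_prod_def atLeast0LessThan, intro sum.cong refl, simp add: mult_cnj_sq)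

lemma bessel: assumes F: "F \<in> carrier_mat r K" and FF: "ctrans F * F = dmat K h"
  and h: "\<And>l. l < K \<Longrightarrow> 0 \<le> h l \<and> h l \<le> 1" and k: "k < r"
  shows "(\<Sum>l<K. (cmod (F $$ (k,l)))^2) \<le> 1"
proof -
  define q where "q = (\<Sum>l<K. (cmod (F $$ (k,l)))^2)"
  define Q where "Q = F * ctrans F"
  have Fs: "ctrans F \<in> carrier_mat K r" using F by auto
  have Q: "Q \<in> carrier_mat r r" unfolding Q_def using F by auto
  have Qkk: "Q $$ (k,k) = complex_of_real q" unfolding Q_def q_def by (rule diag_norm_row[OF F k])
  have QQ: "Q * Q = F * dmat K h * ctrans F"
    unfolding Q_def FF[symmetric] using F Fs by (simp add: assoc_gen)
  have E1: "(Q * Q) $$ (k,k) = complex_of_real (\<Sum>l<K. h l * (cmod (F $$ (k,l)))^2)"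
  proof -
    have "(Q * Q) $$ (k,k) = (\<Sum>l<K. (F * dmat K h) $$ (k,l) * ctrans F $$ (l,k))"
      unfolding QQ using F k by (simp add: scalar_prod_def atLeast0LessThan)
    also have "\<dots> = (\<Sum>l<K. complex_of_real (h l) * (F $$ (k,l) * cnj (F $$ (k,l))))"
    proof (rule sum.cong[OF refl])
      fix l assume l: "l \<in> {..<K}"
      show "(F * dmat K h) $$ (k,l) * ctrans F $$ (l,k) = complex_of_real (h l) * (F $$ (k,l) * cnj (F $$ (k,l)))"
      proof -
        have e: "(F * dmat K h) $$ (k,l) = F $$ (k,l) * complex_of_real (h l)"
          by (rule mult_dmat_index[OF F k], insert l, auto)
        show ?thesis unfolding e using F k l by simp
      qed
    qed
    also have "\<dots> = complex_of_real (\<Sum>l<K. h l * (cmod (F $$ (k,l)))^2)"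
      unfolding of_real_sum by (intro sum.cong refl, simp add: mult_cnj_sq)
    finally show ?thesis .
  qed
  have H1: "(\<Sum>l<K. h l * (cmod (F $$ (k,l)))^2) \<le> q" unfolding q_def
    using h by (intro sum_mono, auto intro: mult_left_le_one_le)
  have E2: "(Q * Q) $$ (k,k) = complex_of_real (\<Sum>j<r. (cmod (Q $$ (k,j)))^2)"
  proof -
    have Qs: "ctrans Q = Q" unfolding Q_def using F by (simp add: ctrans_mult_gen)
    have "(Q * Q) $$ (k,k) = (Q * ctrans Q) $$ (k,k)" using Qs by simp
    thus ?thesis using diag_norm_row[OF Q k] by simp
  qed
  have H2: "q * q \<le> (\<Sum>j<r. (cmod (Q $$ (k,j)))^2)"
  proof -
    have "(cmod (Q $$ (k,k)))^2 \<le> (\<Sum>j<r. (cmod (Q $$ (k,j)))^2)"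
      by (rule member_le_sum[of k "{..<r}" "\<lambda>j. (cmod (Q $$ (k,j)))^2"], insert k, auto)
    moreover have "(cmod (Q $$ (k,k)))^2 = q * q"
    proof -
      have "q \<ge> 0" unfolding q_def by (auto intro: sum_nonneg)
      thus ?thesis unfolding Qkk norm_of_real by (simp add: power2_eq_square)
    qed
    ultimately show ?thesis by simp
  qed
  have "(\<Sum>j<r. (cmod (Q $$ (k,j)))^2) = (\<Sum>l<K. h l * (cmod (F $$ (k,l)))^2)"
  proof -
    have "complex_of_real (\<Sum>j<r. (cmod (Q $$ (k,j)))^2) = complex_of_real (\<Sum>l<K. h l * (cmod (F $$ (k,l)))^2)"
      using E1 E2 by (simp only:)
    thus ?thesis by (simp only: of_real_eq_iff)
  qed
  hence "q * q \<le> q" using H1 H2 by linarith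
  moreover have "q \<ge> 0" unfolding q_def by (auto intro: sum_nonneg)
  ultimately have "q \<le> 1"
  proof (cases "q > 0")
    case True
    have "q * q \<le> q * 1" using \<open>q * q \<le> q\<close> by simp
    thus ?thesis using mult_le_cancel_left_pos[OF True] by blast
  qed auto
  thus ?thesis unfolding q_def .
qed

abbreviation cpoly :: "complex mat \<Rightarrow> complex poly mat" where
  "cpoly M \<equiv> map_mat (\<lambda>a. [:a:]) M"

lemma char_poly_as_det: assumes M: "M \<in> carrier_mat k k"
  shows "char_poly M = det ([:0,1:] \<cdot>\<^sub>m 1\<^sub>m k - cpoly M)"
  unfolding char_poly_def char_poly_matrix_def
  by (rule arg_cong[of _ _ det], rule eq_matI, insert M, auto)

lemma sylvester_cp: assumes A: "A \<in> carrier_mat n m"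
  shows "[:0,1:] ^ n * char_poly (ctrans A * A) = [:0,1:] ^ m * char_poly (A * ctrans A)"
proof -
  have B: "cpoly (ctrans A) \<in> carrier_mat m n" and C: "cpoly A \<in> carrier_mat n m" using A by auto
  have BC: "cpoly (ctrans A) * cpoly A = cpoly (ctrans A * A)"
    by (rule map_poly_mult(1)[symmetric], insert A, auto)
  have CB: "cpoly A * cpoly (ctrans A) = cpoly (A * ctrans A)"
    by (rule map_poly_mult(1)[symmetric], insert A, auto)
  have c1: "char_poly (ctrans A * A) = det ([:0,1:] \<cdot>\<^sub>m 1\<^sub>m m - cpoly (ctrans A * A))"
    by (rule char_poly_as_det, insert A, auto)
  have c2: "char_poly (A * ctrans A) = det ([:0,1:] \<cdot>\<^sub>m 1\<^sub>m n - cpoly (A * ctrans A))"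
    by (rule char_poly_as_det, insert A, auto)
  show ?thesis using sylvester_det[OF B C, of "[:0,1:]"]
    unfolding BC CB c1 c2 .
qed

lemma cp_G_block: assumes A: "A \<in> carrier_mat n m"
  shows "char_poly (four_block_mat (1\<^sub>m m) (ctrans A) A (1\<^sub>m n)) * [:-1,1:] ^ m
     = (char_poly (ctrans A * A) \<circ>\<^sub>p ([:-1,1:] * [:-1,1:])) * [:-1,1:] ^ n"
proof -
  let ?y = "[:-1,1:] :: complex poly"
  let ?G = "four_block_mat (1\<^sub>m m) (ctrans A) A (1\<^sub>m n)"
  have B: "- cpoly (ctrans A) \<in> carrier_mat m n" and C: "- cpoly A \<in> carrier_mat n m" using A by auto
  have cpm: "char_poly_matrix ?G = four_block_mat (?y \<cdot>\<^sub>m 1\<^sub>m m) (- cpoly (ctrans A)) (- cpoly A) (?y \<cdot>\<^sub>m 1\<^sub>m n)"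
    unfolding char_poly_matrix_def by (rule eq_matI, insert A, auto)
  have BC: "(- cpoly (ctrans A)) * (- cpoly A) = cpoly (ctrans A * A)"
    using map_poly_mult(1)[of "ctrans A" m n A m] A by auto
  have hom: "det (?y * ?y \<cdot>\<^sub>m 1\<^sub>m m - cpoly (ctrans A * A)) = char_poly (ctrans A * A) \<circ>\<^sub>p (?y * ?y)"
  proof -
    have ph: "comm_ring_hom (\<lambda>q::complex poly. q \<circ>\<^sub>p (?y * ?y))"
      by (standard, auto simp: pcompose_add pcompose_mult)
    have e: "map_mat (\<lambda>q. q \<circ>\<^sub>p (?y * ?y)) (char_poly_matrix (ctrans A * A)) = ?y * ?y \<cdot>\<^sub>m 1\<^sub>m m - cpoly (ctrans A * A)"
      unfolding char_poly_matrix_def by (rule eq_matI, insert A, auto)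
    show ?thesis unfolding char_poly_def comm_ring_hom.hom_det[OF ph, symmetric] e ..
  qed
  have "char_poly ?G = det (char_poly_matrix ?G)" by (simp add: char_poly_def)
  thus ?thesis unfolding cpm
    using block_det_G[OF B C, of ?y] unfolding BC hom by simp
qed

lemma prod_list_map_mult: "(\<Prod>x\<leftarrow>xs. f x) * (\<Prod>x\<leftarrow>xs. g x) = (\<Prod>x\<leftarrow>xs. f x * g x)"
  for f g :: "'b \<Rightarrow> 'a :: comm_monoid_mult"
  by (induction xs, auto simp: ac_simps)

lemma pcompose_lin: "[:- c, 1:] \<circ>\<^sub>p q = q - [:c:]" for q :: "complex poly"
  by (rule poly_eq_poly_eq_iff[THEN iffD1], rule ext, simp add: poly_pcompose)

lemma pcompose_prod_lin: "(\<Prod>x\<leftarrow>xs. [:- c x, 1:]) \<circ>\<^sub>p q = (\<Prod>x\<leftarrow>xs. q - [:c x:])"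
  for q :: "complex poly"
proof (induction xs)
  case (Cons a xs)
  have "(\<Prod>x\<leftarrow>a # xs. [:- c x, 1:]) \<circ>\<^sub>p q = ([:- c a, 1:] \<circ>\<^sub>p q) * ((\<Prod>x\<leftarrow>xs. [:- c x, 1:]) \<circ>\<^sub>p q)"
    by (simp only: list.map prod_list.Cons pcompose_mult)
  thus ?case unfolding Cons pcompose_lin by (simp only: list.map prod_list.Cons)
qed simp

lemma pcompose_X_power: "[:0, 1:] ^ k \<circ>\<^sub>p q = q ^ k" for q :: "complex poly"
  by (rule poly_eq_poly_eq_iff[THEN iffD1], rule ext, simp add: poly_pcompose)

lemma lin_pair: "[:- complex_of_real (1 + x), 1:] * [:- complex_of_real (1 + - x), 1:]
   = [:-1,1:] * [:-1,1:] - [:complex_of_real (x^2):]"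
  by (rule poly_eq_poly_eq_iff[THEN iffD1], rule ext, simp add: algebra_simps power2_eq_square)

lemma cp_G: assumes A: "A \<in> carrier_mat n m" and ls: "length s = min n m"
  and cp: "char_poly (ctrans A * A) = (\<Prod>x\<leftarrow>s. [:- complex_of_real (x^2), 1:]) * [:0,1:] ^ (m - length s)"
  shows "char_poly (four_block_mat (1\<^sub>m m) (ctrans A) A (1\<^sub>m n))
    = (\<Prod>x\<leftarrow>map (\<lambda>x. 1 + x) (pad (m + n) (s @ map uminus s)). [:- complex_of_real x, 1:])"
proof -
  let ?y = "[:-1,1:] :: complex poly"
  let ?Q = "\<Prod>x\<leftarrow>s. ?y * ?y - [:complex_of_real (x^2):]"
  define t where "t = length s"
  have tm: "t \<le> m" "t \<le> n" using ls unfolding t_def by auto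
  have pad: "pad (m + n) (s @ map uminus s) = s @ map uminus s @ replicate (m + n - 2 * t) 0"
    unfolding pad_def t_def by auto
  have T: "(\<Prod>x\<leftarrow>map (\<lambda>x. 1 + x) (pad (m + n) (s @ map uminus s)). [:- complex_of_real x, 1:])
     = ?Q * ?y ^ (m + n - 2 * t)"
  proof -
    have "map (\<lambda>x. 1 + x) (s @ map uminus s @ replicate (m + n - 2 * t) 0)
      = map (\<lambda>x. 1 + x) s @ map (\<lambda>x. 1 + - x) s @ replicate (m + n - 2 * t) 1" by simp
    hence "(\<Prod>x\<leftarrow>map (\<lambda>x. 1 + x) (pad (m + n) (s @ map uminus s)). [:- complex_of_real x, 1:])
      = (\<Prod>x\<leftarrow>s. [:- complex_of_real (1 + x), 1:]) * (\<Prod>x\<leftarrow>s. [:- complex_of_real (1 + - x), 1:])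
        * ?y ^ (m + n - 2 * t)"
      unfolding pad by (simp only: map_append prod_list.append map_map o_def map_replicate prod_list_replicate,
        simp add: mult.assoc)
    also have "(\<Prod>x\<leftarrow>s. [:- complex_of_real (1 + x), 1:]) * (\<Prod>x\<leftarrow>s. [:- complex_of_real (1 + - x), 1:]) = ?Q"
      unfolding prod_list_map_mult lin_pair ..
    finally show ?thesis .
  qed
  have L: "char_poly (ctrans A * A) \<circ>\<^sub>p (?y * ?y) = ?Q * (?y * ?y) ^ (m - t)"
    unfolding cp t_def
    by (simp add: pcompose_mult pcompose_prod_lin pcompose_X_power)
  have "char_poly (four_block_mat (1\<^sub>m m) (ctrans A) A (1\<^sub>m n)) * ?y ^ m = ?Q * (?y * ?y) ^ (m - t) * ?y ^ n"
    using cp_G_block[OF A] unfolding L .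
  also have "\<dots> = ?Q * ?y ^ (m + n - 2 * t) * ?y ^ m"
  proof -
    have "(?y * ?y) ^ (m - t) * ?y ^ n = ?y ^ (2 * (m - t) + n)"
      by (simp add: power_add power_mult power2_eq_square[symmetric])
    also have "2 * (m - t) + n = (m + n - 2 * t) + m" using tm by auto
    finally show ?thesis by (simp add: power_add ac_simps)
  qed
  finally have "char_poly (four_block_mat (1\<^sub>m m) (ctrans A) A (1\<^sub>m n)) * ?y ^ m = ?Q * ?y ^ (m + n - 2 * t) * ?y ^ m" .
  moreover have "?y ^ m \<noteq> 0" by simp
  ultimately show ?thesis unfolding T by simp
qed

lemma quad_spec: assumes U: "unitary n U" and H: "H = U * dmat n d * ctrans U" and z: "z \<in> carrier_vec n"
  shows "braket z (H *\<^sub>v z) = complex_of_real (\<Sum>k<n. d k * (cmod ((ctrans U *\<^sub>v z) $ k))^2)"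
proof -
  have Uc: "U \<in> carrier_mat n n" using U unfolding unitary_def by auto
  have Us: "ctrans U \<in> carrier_mat n n" using Uc by auto
  have w: "ctrans U *\<^sub>v z \<in> carrier_vec n" using Us z by auto
  have "H *\<^sub>v z = U *\<^sub>v (dmat n d *\<^sub>v (ctrans U *\<^sub>v z))"
  proof -
    have "H *\<^sub>v z = (U * dmat n d) *\<^sub>v (ctrans U *\<^sub>v z)"
      unfolding H by (rule assoc_mult_mat_vec[of _ n n _ n], insert Uc Us z, auto)
    also have "\<dots> = U *\<^sub>v (dmat n d *\<^sub>v (ctrans U *\<^sub>v z))"
      by (rule assoc_mult_mat_vec[of _ n n _ n], insert Uc w, auto)
    finally show ?thesis .
  qed
  hence "braket z (H *\<^sub>v z) = braket (ctrans U *\<^sub>v z) (dmat n d *\<^sub>v (ctrans U *\<^sub>v z))"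
    using braket_mult_vec[OF Uc z mult_mat_vec_carrier[OF dmat_carrier w]] by simp
  also have "\<dots> = complex_of_real (\<Sum>k<n. d k * (cmod ((ctrans U *\<^sub>v z) $ k))^2)"
    by (rule quad_dmat[OF w])
  finally show ?thesis .
qed

lemma quad_spec_col: assumes U: "unitary n U" and H: "H = U * dmat n d * ctrans U" and i: "i < n"
  shows "braket (col U i) (H *\<^sub>v col U i) = complex_of_real (d i)"
proof -
  have Uc: "U \<in> carrier_mat n n" and UU: "ctrans U * U = 1\<^sub>m n" using U unfolding unitary_def by auto
  have z: "col U i \<in> carrier_vec n" using Uc i by auto
  have e: "ctrans U *\<^sub>v col U i = unit_vec n i"
  proof -
    have Us: "ctrans U \<in> carrier_mat n n" using Uc by auto
    have "ctrans U *\<^sub>v col U i = col (ctrans U * U) i" using col_mult2[OF Us Uc i] by simp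
    thus ?thesis unfolding UU using i by simp
  qed
  have "(\<Sum>k<n. d k * (cmod ((ctrans U *\<^sub>v col U i) $ k))^2) = (\<Sum>k<n. if k = i then d k else 0)"
    unfolding e by (intro sum.cong, auto simp: unit_vec_def)
  also have "\<dots> = d i" using i by (simp add: sum.delta)
  finally show ?thesis using quad_spec[OF U H z] by simp
qed

lemma prod_list_mset_eq: fixes f :: "'b \<Rightarrow> 'a :: comm_monoid_mult"
  assumes "mset xs = mset ys" shows "prod_list (map f xs) = prod_list (map f ys)"
proof -
  have "prod_list (map f xs) = prod_mset (mset (map f xs))" by (rule prod_mset_prod_list[symmetric])
  also have "mset (map f xs) = mset (map f ys)" using assms by simp
  also have "prod_mset (mset (map f ys)) = prod_list (map f ys)" by (rule prod_mset_prod_list)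
  finally show ?thesis .
qed

lemma prod_list_filter_split: "prod_list (map f xs) = prod_list (map f (filter P xs)) * prod_list (map f (filter (\<lambda>x. \<not> P x) xs))"
  for f :: "'b \<Rightarrow> 'a :: comm_monoid_mult"
  by (induction xs, auto simp: ac_simps)

lemma char_poly_nz: "A \<in> carrier_mat k k \<Longrightarrow> char_poly A \<noteq> 0"
  using degree_monic_char_poly[of A k] by (metis coeff_0 zero_neq_one)

lemma order_X_power: "order 0 ([:0, 1:] ^ k :: complex poly) = k"
  using order_power_n_n[of "0::complex" k] by simp

lemma sv_exists: assumes A: "A \<in> carrier_mat n m"
  shows "\<exists>s. length s = min n m \<and> sorted (rev s) \<and> (\<forall>x\<in>set s. x \<ge> 0) \<and>
    char_poly (ctrans A * A) = (\<Prod>x\<leftarrow>s. [:- complex_of_real (x^2), 1:]) * [:0,1:] ^ (m - length s)"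
proof -
  define H where "H = ctrans A * A"
  have As: "ctrans A \<in> carrier_mat m n" using A by auto
  have Hc: "H \<in> carrier_mat m m" unfolding H_def using A by auto
  have Hs: "ctrans H = H" unfolding H_def using A by (simp add: ctrans_mult_gen)
  obtain W t where W: "unitary m W" and HW: "H = W * dmat m t * ctrans W"
    using spectral[OF herm_of_ctrans[OF Hc Hs]] by auto
  have cpH: "char_poly H = (\<Prod>i\<leftarrow>[0..<m]. [:- complex_of_real (t i), 1:])"
    by (rule char_poly_dmat[OF W HW])
  have tnn: "t i \<ge> 0" if i: "i < m" for i
  proof -
    have Wc: "W \<in> carrier_mat m m" using W unfolding unitary_def by auto
    define z where "z = col W i"
    have z: "z \<in> carrier_vec m" unfolding z_def using Wc i by auto
    have Az: "A *\<^sub>v z \<in> carrier_vec n" using A z by auto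
    have "H *\<^sub>v z = ctrans A *\<^sub>v (A *\<^sub>v z)" unfolding H_def
      by (rule assoc_mult_mat_vec[of _ m n _ m], insert A z, auto)
    hence "braket z (H *\<^sub>v z) = braket (A *\<^sub>v z) (A *\<^sub>v z)"
      using braket_mult_vec[OF As z Az] by simp
    moreover have "braket z (H *\<^sub>v z) = complex_of_real (t i)"
      unfolding z_def by (rule quad_spec_col[OF W HW i])
    ultimately have "t i = Re (braket (A *\<^sub>v z) (A *\<^sub>v z))" by (metis Re_complex_of_real)
    thus ?thesis using braket_self_ge0(1) by simp
  qed
  define ts where "ts = map t [0..<m]"
  define pos where "pos = filter (\<lambda>x. 0 < x) ts"
  define z where "z = length (filter (\<lambda>x. \<not> 0 < x) ts)"
  define p where "p = length pos"
  define f where "f = (\<lambda>x::real. [:- complex_of_real x, 1:])"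
  have tsnn: "x \<in> set ts \<Longrightarrow> x \<ge> 0" for x unfolding ts_def using tnn by auto
  have zs: "filter (\<lambda>x. \<not> 0 < x) ts = replicate z 0" unfolding z_def
    by (rule replicate_length_same[symmetric], insert tsnn, force)
  have pz: "p + z = m" unfolding p_def z_def pos_def
    using sum_length_filter_compl[of "\<lambda>x. 0 < x" ts] unfolding ts_def by simp
  have cpH2: "char_poly H = prod_list (map f pos) * [:0,1:] ^ z"
  proof -
    have "char_poly H = prod_list (map f ts)" unfolding cpH ts_def f_def by (simp add: o_def)
    also have "\<dots> = prod_list (map f pos) * prod_list (map f (filter (\<lambda>x. \<not> 0 < x) ts))"
      unfolding pos_def by (rule prod_list_filter_split)
    also have "prod_list (map f (filter (\<lambda>x. \<not> 0 < x) ts)) = [:0,1:] ^ z"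
      unfolding zs f_def by (simp add: prod_list_replicate)
    finally show ?thesis .
  qed
  have ord_pos: "order 0 (prod_list (map f pos)) = 0"
  proof -
    have "prod_list (map f pos) = (\<Prod>x\<leftarrow>map complex_of_real pos. [:- x, 1:])"
      unfolding f_def by (simp add: o_def)
    also have "order 0 \<dots> = count (mset (map complex_of_real pos)) 0" by (rule count_prod_linear)
    also have "\<dots> = 0" unfolding pos_def by (auto simp: count_eq_zero_iff)
    finally show ?thesis .
  qed
  have pfnz: "prod_list (map f pos) \<noteq> 0" unfolding f_def by (subst prod_list_zero_iff, auto)
  have ordH: "order 0 (char_poly H) = z"
    unfolding cpH2 by (subst order_mult, insert pfnz, auto simp: ord_pos order_X_power)
  have syl: "[:0,1:] ^ n * char_poly H = [:0,1:] ^ m * char_poly (A * ctrans A)"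
    unfolding H_def by (rule sylvester_cp[OF A])
  have K: "A * ctrans A \<in> carrier_mat n n" using A by auto
  have "order 0 ([:0,1:] ^ n * char_poly H) = n + z"
    by (subst order_mult, insert char_poly_nz[OF Hc], auto simp: ordH order_X_power)
  moreover have "order 0 ([:0,1:] ^ m * char_poly (A * ctrans A)) \<ge> m"
    by (subst order_mult, insert char_poly_nz[OF K], auto simp: order_X_power)
  ultimately have "n + z \<ge> m" unfolding syl by simp
  hence pmin: "p \<le> min n m" using pz by auto
  define s where "s = sort_desc (map sqrt pos @ replicate (min n m - p) 0)"
  have ls: "length s = min n m" unfolding s_def sort_desc_def using pmin p_def by simp
  have ms: "mset s = mset (map sqrt pos @ replicate (min n m - p) 0)" unfolding s_def sort_desc_def by simp
  have srt: "sorted (rev s)" unfolding s_def sort_desc_def by simp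
  have snn: "\<forall>x\<in>set s. x \<ge> 0"
  proof
    fix x assume "x \<in> set s"
    hence "x \<in> set (map sqrt pos @ replicate (min n m - p) 0)" using ms by (metis set_mset_mset)
    thus "x \<ge> 0" unfolding pos_def by auto
  qed
  have "(\<Prod>x\<leftarrow>s. [:- complex_of_real (x^2), 1:]) = (\<Prod>x\<leftarrow>map sqrt pos @ replicate (min n m - p) 0. [:- complex_of_real (x^2), 1:])"
    by (rule prod_list_mset_eq[OF ms])
  also have "\<dots> = prod_list (map f pos) * [:0,1:] ^ (min n m - p)"
  proof -
    have "(\<Prod>x\<leftarrow>map sqrt pos. [:- complex_of_real (x^2), 1:]) = prod_list (map f pos)"
      unfolding f_def pos_def map_map o_def
      by (rule arg_cong[of _ _ prod_list], rule map_cong, auto)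
    thus ?thesis by (simp add: prod_list_replicate)
  qed
  finally have PS: "(\<Prod>x\<leftarrow>s. [:- complex_of_real (x^2), 1:]) = prod_list (map f pos) * [:0,1:] ^ (min n m - p)" .
  have e: "min n m - p + (m - length s) = z" using pz pmin ls by auto
  have "(\<Prod>x\<leftarrow>s. [:- complex_of_real (x^2), 1:]) * [:0,1:] ^ (m - length s) = prod_list (map f pos) * [:0,1:] ^ z"
    unfolding PS mult.assoc power_add[symmetric] e ..
  hence "char_poly (ctrans A * A) = (\<Prod>x\<leftarrow>s. [:- complex_of_real (x^2), 1:]) * [:0,1:] ^ (m - length s)"
    unfolding cpH2[unfolded H_def] by simp
  thus ?thesis using ls srt snn by blast
qed

lemma main_ineq:
  assumes U: "unitary N U" and rho: "\<rho> = U * dmat N lam' * ctrans U"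
    and Z: "Z \<in> carrier_mat N K" and V: "unitary K V" and G: "ctrans Z * Z = V * dmat K g * ctrans V"
    and lnn: "\<And>k. k < N \<Longrightarrow> lam' k \<ge> 0"
  shows "(\<Sum>c<K. Re (braket (col Z c) (\<rho> *\<^sub>v col Z c))) \<le> dotp (sort_desc (map lam' [0..<N])) (sort_desc (map g [0..<K]))"
proof -
  have Uc: "U \<in> carrier_mat N N" and UU: "ctrans U * U = 1\<^sub>m N" and UU': "U * ctrans U = 1\<^sub>m N"
    using unitaryD[OF U] by auto
  have Vc: "V \<in> carrier_mat K K" and VV: "ctrans V * V = 1\<^sub>m K" and VV': "V * ctrans V = 1\<^sub>m K"
    using unitaryD[OF V] by auto
  have Us: "ctrans U \<in> carrier_mat N N" and Vs: "ctrans V \<in> carrier_mat K K" and Zs: "ctrans Z \<in> carrier_mat K N"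
    using Uc Vc Z by auto
  define M where "M = ctrans U * Z"
  define P where "P = M * V"
  have Mc: "M \<in> carrier_mat N K" unfolding M_def using Us Z by auto
  have Pc: "P \<in> carrier_mat N K" unfolding P_def using Mc Vc by auto
  have PP: "ctrans P * P = dmat K g"
  proof -
    have "ctrans P * P = ctrans V * (ctrans Z * (U * ctrans U) * Z) * V"
      unfolding P_def M_def using Uc Vc Z by (simp add: ctrans_mult_gen assoc_gen)
    also have "\<dots> = ctrans V * (ctrans Z * Z) * V"
      unfolding UU' using Z by simp
    also have "\<dots> = ctrans V * V * dmat K g * (ctrans V * V)"
      unfolding G using Vc by (simp add: assoc_gen)
    also have "\<dots> = dmat K g" unfolding VV by simp
    finally show ?thesis .
  qed
  have MP: "M * ctrans M = P * ctrans P"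
  proof -
    have "P * ctrans P = M * (V * ctrans V) * ctrans M"
      unfolding P_def using Mc Vc by (simp add: ctrans_mult_gen assoc_gen)
    thus ?thesis unfolding VV' using Mc by simp
  qed
  define pn where "pn = (\<lambda>k l. (cmod (P $$ (k,l)))^2)"
  have g_eq: "g l = (\<Sum>k<N. pn k l)" if l: "l < K" for l
  proof -
    have "complex_of_real (g l) = (ctrans P * P) $$ (l,l)" unfolding PP using l by simp
    also have "\<dots> = complex_of_real (\<Sum>k<N. pn k l)" unfolding pn_def by (rule diag_norm_col[OF Pc l])
    finally show ?thesis by (simp only: of_real_eq_iff)
  qed
  have gnn: "g l \<ge> 0" if "l < K" for l using g_eq[OF that] unfolding pn_def by (auto intro: sum_nonneg)
  have rowM: "(\<Sum>c<K. (cmod (M $$ (k,c)))^2) = (\<Sum>l<K. pn k l)" if k: "k < N" for k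
  proof -
    have "complex_of_real (\<Sum>c<K. (cmod (M $$ (k,c)))^2) = (M * ctrans M) $$ (k,k)"
      by (rule diag_norm_row[OF Mc k, symmetric])
    also have "\<dots> = complex_of_real (\<Sum>l<K. pn k l)" unfolding MP pn_def by (rule diag_norm_row[OF Pc k])
    finally show ?thesis by (simp only: of_real_eq_iff)
  qed
  define sc where "sc = (\<lambda>l. if g l > 0 then 1 / sqrt (g l) else 0)"
  define F where "F = P * dmat K sc"
  have Fc: "F \<in> carrier_mat N K" unfolding F_def using Pc by auto
  have FF: "ctrans F * F = dmat K (\<lambda>l. sc l * g l * sc l)"
  proof -
    have "ctrans F * F = dmat K sc * (ctrans P * P) * dmat K sc"
      unfolding F_def using Pc by (simp add: ctrans_mult_gen assoc_gen)
    thus ?thesis unfolding PP dmat_mult .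
  qed
  have h01: "0 \<le> sc l * g l * sc l \<and> sc l * g l * sc l \<le> 1" for l
    unfolding sc_def by (cases "g l > 0", auto simp: field_simps)
  define c where "c = (\<lambda>k l. pn k l * (sc l)^2)"
  have rows: "(\<Sum>l<K. c k l) \<le> 1" if k: "k < N" for k
  proof -
    have "(\<Sum>l<K. c k l) = (\<Sum>l<K. (cmod (F $$ (k,l)))^2)"
    proof (rule sum.cong[OF refl])
      fix l assume "l \<in> {..<K}"
      hence l: "l < K" by auto
      have "F $$ (k,l) = P $$ (k,l) * complex_of_real (sc l)" unfolding F_def by (rule mult_dmat_index[OF Pc k l])
      thus "c k l = (cmod (F $$ (k,l)))^2" unfolding c_def pn_def by (simp add: norm_mult power_mult_distrib)
    qed
    also have "\<dots> \<le> 1" by (rule bessel[OF Fc FF h01 k])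
    finally show ?thesis .
  qed
  have cols: "(\<Sum>k<N. c k l) \<le> 1" if l: "l < K" for l
  proof -
    have "(\<Sum>k<N. c k l) = sc l * g l * sc l" unfolding c_def g_eq[OF l]
      by (simp add: sum_distrib_left power2_eq_square ac_simps)
    thus ?thesis using h01[of l] by simp
  qed
  have cnn: "c k l \<ge> 0" for k l unfolding c_def pn_def by auto
  have pn_c: "(\<Sum>l<K. pn k l) = (\<Sum>l<K. g l * c k l)" if k: "k < N" for k
  proof (rule sum.cong[OF refl])
    fix l assume "l \<in> {..<K}"
    hence l: "l < K" by auto
    show "pn k l = g l * c k l"
    proof (cases "g l > 0")
      case True thus ?thesis unfolding c_def sc_def by (simp add: field_simps power2_eq_square)
    next
      case False
      hence "g l = 0" using gnn[OF l] by auto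
      hence "(\<Sum>k<N. pn k l) = 0" using g_eq[OF l] by simp
      hence "pn k l = 0" using k by (subst (asm) sum_nonneg_eq_0_iff, auto simp: pn_def)
      thus ?thesis by (simp add: c_def)
    qed
  qed
  have lhs: "Re (braket (col Z c') (\<rho> *\<^sub>v col Z c')) = (\<Sum>k<N. lam' k * (cmod (M $$ (k,c')))^2)" if c': "c' < K" for c'
  proof -
    have z: "col Z c' \<in> carrier_vec N" using Z c' by auto
    have "(ctrans U *\<^sub>v col Z c') = col M c'" unfolding M_def using col_mult2[OF Us Z c'] by simp
    hence e: "\<And>k. k < N \<Longrightarrow> (ctrans U *\<^sub>v col Z c') $ k = M $$ (k,c')" using Mc c' by auto
    have "braket (col Z c') (\<rho> *\<^sub>v col Z c') = complex_of_real (\<Sum>k<N. lam' k * (cmod ((ctrans U *\<^sub>v col Z c') $ k))^2)"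
      by (rule quad_spec[OF U rho z])
    also have "(\<Sum>k<N. lam' k * (cmod ((ctrans U *\<^sub>v col Z c') $ k))^2) = (\<Sum>k<N. lam' k * (cmod (M $$ (k,c')))^2)"
      using e by (intro sum.cong refl, auto)
    finally show ?thesis by simp
  qed
  have "(\<Sum>c<K. Re (braket (col Z c) (\<rho> *\<^sub>v col Z c))) = (\<Sum>c<K. \<Sum>k<N. lam' k * (cmod (M $$ (k,c)))^2)"
    using lhs by (intro sum.cong refl, auto)
  also have "\<dots> = (\<Sum>k<N. lam' k * (\<Sum>c<K. (cmod (M $$ (k,c)))^2))"
    by (subst sum.swap, simp add: sum_distrib_left)
  also have "\<dots> = (\<Sum>k<N. \<Sum>l<K. lam' k * g l * c k l)"
    using rowM pn_c by (intro sum.cong refl, auto simp: sum_distrib_left mult.assoc)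
  also have "\<dots> = (\<Sum>k<length (map lam' [0..<N]). \<Sum>l<length (map g [0..<K]).
      map lam' [0..<N] ! k * map g [0..<K] ! l * c k l)"
    by (intro sum.cong refl, auto)
  also have "\<dots> \<le> dotp (sort_desc (map lam' [0..<N])) (sort_desc (map g [0..<K]))"
    by (rule ds_ineq, insert lnn gnn cnn rows cols, auto)
  finally show ?thesis .
qed

lemma mset_real_of_prod: fixes xs ys :: "real list"
  assumes "(\<Prod>x\<leftarrow>xs. [:- complex_of_real x, 1:]) = (\<Prod>x\<leftarrow>ys. [:- complex_of_real x, 1:])"
  shows "mset xs = mset ys"
proof -
  have "(\<Prod>x\<leftarrow>map complex_of_real xs. [:- x, 1:]) = (\<Prod>x\<leftarrow>map complex_of_real ys. [:- x, 1:])"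
    using assms by (simp add: o_def)
  hence "mset (map complex_of_real xs) = mset (map complex_of_real ys)" by (rule mset_from_prod_linear)
  hence "image_mset Re (mset (map complex_of_real xs)) = image_mset Re (mset (map complex_of_real ys))" by simp
  thus ?thesis by (simp add: image_mset.compositionality o_def)
qed

theorem lemma1:
  fixes N m n :: nat and \<rho> :: "complex mat" and lam :: "real list"
    and e a :: "nat \<Rightarrow> complex vec"
  assumes "density_mat N \<rho>"
    and "length lam = N" and "eigenvalue_vector \<rho> lam"
    and "orthonormal_basis N e" and "orthonormal_basis N a"
    and "1 \<le> m" and "m \<le> N" and "1 \<le> n" and "n \<le> N"
  shows "let p = (\<lambda>i. Re (braket (e i) (\<rho> *\<^sub>v e i)));
             q = (\<lambda>i. Re (braket (a i) (\<rho> *\<^sub>v a i)));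
             A = mat n m (\<lambda>(i,j). braket (a i) (e j));
             s = singular_values A;
             \<mu> = map (\<lambda>x. 1 + x) (pad (m + n) (s @ map uminus s))
         in (\<Sum>j<m. p j) + (\<Sum>i<n. q i) \<le> dotp (sort_desc lam) (sort_desc \<mu>)"
proof -
  note dens = assms(1)[unfolded density_mat_def]
  have rhoc: "\<rho> \<in> carrier_mat N N" using dens by blast
  have rhoh: "herm N \<rho>" unfolding herm_def using dens by blast
  have psd: "\<And>v. v \<in> carrier_vec N \<Longrightarrow> Re (braket v (\<rho> *\<^sub>v v)) \<ge> 0" using dens by blast
  have ec: "\<And>i. i < N \<Longrightarrow> e i \<in> carrier_vec N" and eo: "\<And>i j. i < N \<Longrightarrow> j < N \<Longrightarrow> braket (e i) (e j) = (if i = j then 1 else 0)"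
    using assms(4) unfolding orthonormal_basis_def by blast+
  have ac: "\<And>i. i < N \<Longrightarrow> a i \<in> carrier_vec N" and ao: "\<And>i j. i < N \<Longrightarrow> j < N \<Longrightarrow> braket (a i) (a j) = (if i = j then 1 else 0)"
    using assms(5) unfolding orthonormal_basis_def by blast+
  obtain U lam' where U: "unitary N U" and rhoU: "\<rho> = U * dmat N lam' * ctrans U"
    using spectral[OF rhoh] by auto
  have ms_lam: "mset (map lam' [0..<N]) = mset lam"
  proof (rule mset_real_of_prod)
    show "(\<Prod>x\<leftarrow>map lam' [0..<N]. [:- complex_of_real x, 1:]) = (\<Prod>x\<leftarrow>lam. [:- complex_of_real x, 1:])"
      using char_poly_dmat[OF U rhoU] assms(3) unfolding eigenvalue_vector_def by (simp add: o_def)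
  qed
  have lnn: "lam' k \<ge> 0" if k: "k < N" for k
  proof -
    have Uc: "U \<in> carrier_mat N N" using U unfolding unitary_def by auto
    have "braket (col U k) (\<rho> *\<^sub>v col U k) = complex_of_real (lam' k)" by (rule quad_spec_col[OF U rhoU k])
    moreover have "Re (braket (col U k) (\<rho> *\<^sub>v col U k)) \<ge> 0" by (rule psd, insert Uc k, auto)
    ultimately show ?thesis by simp
  qed
  define K where "K = m + n"
  define Z where "Z = mat N K (\<lambda>(r,c). if c < m then e c $ r else a (c - m) $ r)"
  have Zc: "Z \<in> carrier_mat N K" unfolding Z_def by auto
  have colZ: "col Z c = (if c < m then e c else a (c - m))" if c: "c < K" for c
  proof -
    have v: "(if c < m then e c else a (c - m)) \<in> carrier_vec N"
      using ec ac c assms(7,9) unfolding K_def by auto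
    show ?thesis by (rule eq_vecI, insert v c, auto simp: Z_def)
  qed
  define A where "A = mat n m (\<lambda>(i,j). braket (a i) (e j))"
  have Ac: "A \<in> carrier_mat n m" unfolding A_def by auto
  have ZZ: "ctrans Z * Z = four_block_mat (1\<^sub>m m) (ctrans A) A (1\<^sub>m n)"
  proof (rule eq_matI)
    fix c d assume "c < dim_row (four_block_mat (1\<^sub>m m) (ctrans A) A (1\<^sub>m n))"
      "d < dim_col (four_block_mat (1\<^sub>m m) (ctrans A) A (1\<^sub>m n))"
    hence c: "c < K" and d: "d < K" unfolding K_def using Ac by auto
    have "(ctrans Z * Z) $$ (c,d) = braket (col Z c) (col Z d)"
      using Zc c d by (simp add: scalar_prod_def braket_def atLeast0LessThan)
    also have "\<dots> = four_block_mat (1\<^sub>m m) (ctrans A) A (1\<^sub>m n) $$ (c,d)"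
    proof -
      have mN: "m \<le> N" "n \<le> N" using assms by auto
      show ?thesis
      proof (cases "c < m")
        case True note cm = this
        show ?thesis
        proof (cases "d < m")
          case True thus ?thesis using cm c d mN eo Ac unfolding colZ[OF c] colZ[OF d] by auto
        next
          case False
          have dm: "d - m < N" using d False mN unfolding K_def by auto
          have "braket (e c) (a (d - m)) = cnj (braket (a (d - m)) (e c))"
            by (rule braket_cnj, insert ec[of c] ac[OF dm] cm mN, auto)
          thus ?thesis using cm False c d Ac unfolding colZ[OF c] colZ[OF d] K_def by (auto simp: A_def)
        qed
      next
        case False note cm = this
        show ?thesis
        proof (cases "d < m")
          case True thus ?thesis using cm c d Ac unfolding colZ[OF c] colZ[OF d] K_def by (auto simp: A_def)
        next
          case False thus ?thesis using cm c d mN ao Ac unfolding colZ[OF c] colZ[OF d] K_def by auto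
        qed
      qed
    qed
    finally show "(ctrans Z * Z) $$ (c,d) = four_block_mat (1\<^sub>m m) (ctrans A) A (1\<^sub>m n) $$ (c,d)" .
  qed (insert Zc Ac, auto simp: K_def)
  have Gc: "ctrans Z * Z \<in> carrier_mat K K" using Zc by auto
  have Gs: "ctrans (ctrans Z * Z) = ctrans Z * Z" using Zc by (simp add: ctrans_mult_gen)
  obtain V g where V: "unitary K V" and GV: "ctrans Z * Z = V * dmat K g * ctrans V"
    using spectral[OF herm_of_ctrans[OF Gc Gs]] by auto
  define s where "s = singular_values A"
  define \<mu> where "\<mu> = map (\<lambda>x. 1 + x) (pad (m + n) (s @ map uminus s))"
  have ex: "\<exists>s. length s = min (dim_row A) (dim_col A) \<and> sorted (rev s) \<and> (\<forall>x\<in>set s. x \<ge> 0)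
      \<and> char_poly (ctrans A * A) = (\<Prod>x\<leftarrow>s. [:- complex_of_real (x^2), 1:]) * [:0, 1:] ^ (dim_col A - length s)"
    using sv_exists[OF Ac] Ac by simp
  have sp: "length s = min n m" "char_poly (ctrans A * A) = (\<Prod>x\<leftarrow>s. [:- complex_of_real (x^2), 1:]) * [:0,1:] ^ (m - length s)"
    using someI_ex[OF ex] Ac unfolding s_def singular_values_def by auto
  have ms_mu: "mset (map g [0..<K]) = mset \<mu>"
  proof (rule mset_real_of_prod)
    have "char_poly (ctrans Z * Z) = (\<Prod>x\<leftarrow>\<mu>. [:- complex_of_real x, 1:])"
      unfolding ZZ \<mu>_def by (rule cp_G[OF Ac sp])
    thus "(\<Prod>x\<leftarrow>map g [0..<K]. [:- complex_of_real x, 1:]) = (\<Prod>x\<leftarrow>\<mu>. [:- complex_of_real x, 1:])"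
      using char_poly_dmat[OF V GV] by (simp add: o_def)
  qed
  have main: "(\<Sum>c<K. Re (braket (col Z c) (\<rho> *\<^sub>v col Z c))) \<le> dotp (sort_desc lam) (sort_desc \<mu>)"
    using main_ineq[OF U rhoU Zc V GV lnn] sort_desc_mset[OF ms_lam] sort_desc_mset[OF ms_mu] by simp
  have split: "(\<Sum>c<K. Re (braket (col Z c) (\<rho> *\<^sub>v col Z c)))
      = (\<Sum>j<m. Re (braket (e j) (\<rho> *\<^sub>v e j))) + (\<Sum>i<n. Re (braket (a i) (\<rho> *\<^sub>v a i)))"
  proof -
    let ?f = "\<lambda>c. Re (braket (col Z c) (\<rho> *\<^sub>v col Z c))"
    have "(\<Sum>c<K. ?f c) = (\<Sum>c\<in>{0..<m}. ?f c) + (\<Sum>c\<in>{m..<m+n}. ?f c)"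
      unfolding K_def lessThan_atLeast0 by (rule sum.atLeastLessThan_concat[symmetric], auto)
    also have "(\<Sum>c\<in>{0..<m}. ?f c) = (\<Sum>j<m. Re (braket (e j) (\<rho> *\<^sub>v e j)))"
      unfolding lessThan_atLeast0 using colZ unfolding K_def by (intro sum.cong refl, auto)
    also have "(\<Sum>c\<in>{m..<m+n}. ?f c) = (\<Sum>i\<in>{0..<n}. ?f (i + m))"
      using sum.shift_bounds_nat_ivl[of ?f 0 m n] by (simp add: add.commute)
    also have "\<dots> = (\<Sum>i<n. Re (braket (a i) (\<rho> *\<^sub>v a i)))"
      unfolding lessThan_atLeast0 using colZ unfolding K_def by (intro sum.cong refl, auto)
    finally show ?thesis .
  qed
  show ?thesis unfolding Let_def A_def[symmetric] s_def[symmetric] \<mu>_def[symmetric]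
    using main unfolding split .
qed

end
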